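(* For the DSF process on $K_{N+1}$ started with $m_0=m_0(N)$ empty vertices, where $m_0(N)\to\infty$ as $N\to\infty$, the scaled halting time $T_N/N$ converges in distribution to a random variable $\tau$ with Laplace transform $$\mathbb{E}[e^{-\sigma\tau}]=\prod_{m\ge1}\Big[1+\frac{\sigma}{m^2}\Big]^{-1}=\frac{\pi\sqrt{\sigma}}{\sinh(\pi\sqrt{\sigma})},\qquad \sigma\ge 0,$$ and probability density on $(0,\infty)$ $$\mathcal{P}(\tau)=\sum_{k=-\infty}^{\infty}(-1)^{k+1}k^2e^{-k^2\tau}.$$
   Context: Dynamic space filling (DSF) on the complete graph $K_{N+1}$ (vertex set of size $N+1$, every two distinct vertices adjacent): there are $N+1$ particles distributed among the $N+1$ vertices. The particles at a vertex form a pile ordered by arrival time; a particle arriving at a vertex is placed on top of the pile. The bottom particle of each nonempty pile never moves. Every other particle independently jumps, at total rate $1$, to one of the $N$ other vertices chosen uniformly at random (rate $1/N$ to each). A vertex is empty if it holds no particle. The halting time $T_N$ is the first time at which every vertex holds exactly one particle. *)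

theory Defs
  imports "HOL-Probability.Probability"
begin

text \<open>A configuration maps each vertex
  to its pile, a list of particles with the head being the TOP of the pile
  (most recent arrival) and the last element the BOTTOM particle.\<close>

type_synonym config = "nat \<Rightarrow> nat list"

definition valid_config :: "nat \<Rightarrow> config \<Rightarrow> bool" where
  "valid_config N c \<longleftrightarrow>
     (\<forall>v. N < v \<longrightarrow> c v = []) \<and>
     (\<forall>v. distinct (c v)) \<and>
     (\<forall>v w. v \<noteq> w \<longrightarrow> set (c v) \<inter> set (c w) = {}) \<and>
     (\<Union>v\<in>{0..N}. set (c v)) = {0..N}"

definition empty_vertices :: "nat \<Rightarrow> config \<Rightarrow> nat set" where
  "empty_vertices N c = {v \<in> {0..N}. c v = []}"

definition halted :: "nat \<Rightarrow> config \<Rightarrow> bool" where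
  "halted N c \<longleftrightarrow> (\<forall>v\<in>{0..N}. length (c v) = 1)"

text \<open>Uniformized jump chain: the continuous-time DSF process is realized by a Poisson
  clock of rate N+1; at each ring a particle p is chosen uniformly among the N+1
  particles and a target vertex w uniformly among the N vertices other than the
  vertex v of p; if p is not the bottom particle of its pile it moves to the top of
  the pile at w, otherwise nothing happens.  Each non-bottom particle thus jumps to
  each other vertex at rate (N+1) * 1/(N+1) * 1/N = 1/N, as required.\<close>

definition dsf_step :: "nat \<Rightarrow> config \<Rightarrow> config pmf" where
  "dsf_step N c =
     do { p \<leftarrow> pmf_of_set {0..N};
          let v = (SOME v. v \<le> N \<and> p \<in> set (c v));
          w \<leftarrow> pmf_of_set ({0..N} - {v});
          return_pmf (if p = last (c v) then c
                      else c(v := remove1 p (c v), w := p # c w)) }"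

fun dsf_paths :: "nat \<Rightarrow> config \<Rightarrow> nat \<Rightarrow> config list pmf" where
  "dsf_paths N c 0 = return_pmf [c]"
| "dsf_paths N c (Suc n) =
     bind_pmf (dsf_paths N c n) (\<lambda>xs. map_pmf (\<lambda>y. xs @ [y]) (dsf_step N (last xs)))"

definition halt_by :: "nat \<Rightarrow> config \<Rightarrow> nat \<Rightarrow> real" where
  "halt_by N c n = measure_pmf.prob (dsf_paths N c n) {xs. \<exists>x\<in>set xs. halted N x}"

text \<open>Distribution function P(T_N \<le> t) of the halting time: T_N \<le> t iff the hitting
  step K of the jump chain is at most the number of clock rings in [0,t], which is
  Poisson((N+1) t) and independent of the chain.\<close>

definition halting_time_cdf :: "nat \<Rightarrow> config \<Rightarrow> real \<Rightarrow> real" where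
  "halting_time_cdf N c t =
     (if t < 0 then 0
      else (\<Sum>n. exp (- (real (N+1) * t)) * (real (N+1) * t) ^ n / fact n * halt_by N c n))"

definition tau_density :: "real \<Rightarrow> real" where
  "tau_density x = (if 0 < x then infsum (\<lambda>k::int. (-1) powi (k+1) * (real_of_int k)^2 * exp (- ((real_of_int k)^2 * x))) UNIV
                    else 0)"

definition tau_law :: "real measure" where
  "tau_law = density lborel (\<lambda>x. ennreal (tau_density x))"

end

theory Submission
  imports Defs "HOL-Analysis.Analysis"
begin

definition cc :: "nat \<Rightarrow> nat \<Rightarrow> real" where
  "cc m k = 2 * (-1)^(k+1) * (fact m)^2 / (fact (m-k) * fact (m+k))"

lemma cc_rec:
  assumes "1 \<le> k" "k < m"
  shows "cc m k * (real m ^ 2 - real k ^ 2) = real m ^ 2 * cc (m-1) k"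
proof -
  obtain n where m: "m = Suc n" using assms by (cases m) auto
  have k: "k \<le> n" using assms m by auto
  have e1: "m - k = Suc (n - k)" using k m by auto
  have e2: "m + k = Suc (n + k)" using m by auto
  have f1: "fact (m-k) = real (Suc (n-k)) * fact (n-k)" unfolding e1 by simp
  have f2: "fact (m+k) = real (Suc (n+k)) * fact (n+k)" unfolding e2 by simp
  have f3: "(fact m :: real) = real (Suc n) * fact n" unfolding m by simp
  have r1: "real (Suc (n-k)) = real m - real k" using k m by auto
  have r2: "real (Suc (n+k)) = real m + real k" using m by auto
  have pos: "real m - real k > 0" "real m + real k > 0" using assms by auto
  have nm: "n = m - 1" using m by simp
  define s :: real where "s = (-1)^(k+1)"
  have f1': "(fact (m-k)::real) = (real m - real k) * fact (n-k)" using f1 r1 by simp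
  have f2': "(fact (m+k)::real) = (real m + real k) * fact (n+k)" using f2 r2 by simp
  have f3': "(fact m::real) = real m * fact n" using f3 m by simp
  have L: "cc m k = 2 * s * (real m * fact n)^2 / (((real m - real k) * fact (n-k)) * ((real m + real k) * fact (n+k)))"
    unfolding cc_def s_def f1' f2' f3' by simp
  have R: "cc (m-1) k = 2 * s * (fact n)^2 / (fact (n-k) * fact (n+k))"
    unfolding cc_def s_def nm by simp
  have d: "real m ^ 2 - real k ^ 2 = (real m - real k) * (real m + real k)"
    by (simp add: power2_eq_square algebra_simps)
  have nz: "(fact (n-k) :: real) \<noteq> 0" "(fact (n+k) :: real) \<noteq> 0" by auto
  have aux: "\<And>X a b B C::real. a \<noteq> 0 \<Longrightarrow> b \<noteq> 0 \<Longrightarrow> B \<noteq> 0 \<Longrightarrow> C \<noteq> 0 \<Longrightarrow> X/((a*B)*(b*C)) * (a*b) = X/(B*C)"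
    by (simp add: field_simps)
  have "cc m k * (real m ^ 2 - real k ^ 2) = 2 * s * (real m * fact n)^2 / (fact (n-k) * fact (n+k))"
    unfolding L d by (rule aux) (use pos nz in auto)
  also have "\<dots> = real m ^ 2 * cc (m-1) k" unfolding R by (simp add: power_mult_distrib)
  finally show ?thesis .
qed

lemma cc_ratio: "k \<le> m \<Longrightarrow> cc m k = 2 * (-1)^(k+1) * real ((2*m) choose (m-k)) / real ((2*m) choose m)"
proof -
  assume k: "k \<le> m"
  have a: "real ((2*m) choose (m-k)) = fact (2*m) / (fact (m-k) * fact (m+k))"
    using k by (subst binomial_fact) (auto simp: algebra_simps)
  have b: "real ((2*m) choose m) = fact (2*m) / (fact m * fact m)"
    by (subst binomial_fact) (auto simp: algebra_simps mult_2)
  show ?thesis unfolding cc_def a b by (simp add: field_simps power2_eq_square)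
qed

lemma binom_alt_half:
  fixes m :: nat assumes "m \<ge> 1"
  shows "(\<Sum>k=1..m. 2 * (-1)^(k+1) * real ((2*m) choose (m-k))) = real ((2*m) choose m)"
proof -
  let ?b = "\<lambda>i. (-1::real)^i * real ((2*m) choose i)"
  define S where "S = (\<Sum>k=1..m. (-1::real)^k * real ((2*m) choose (m-k)))"
  have z: "(\<Sum>i\<le>2*m. ?b i) = 0" using choose_alternating_sum[of "2*m"] assms by simp
  have split: "{..2*m} = {..<m} \<union> {m} \<union> {m<..2*m}" by auto
  have dec: "(\<Sum>i\<le>2*m. ?b i) = (\<Sum>i<m. ?b i) + ?b m + (\<Sum>i\<in>{m<..2*m}. ?b i)"
    unfolding split by (subst sum.union_disjoint; auto)+
  have bm: "?b (m-k) = (-1)^m * ((-1)^k * real ((2*m) choose (m-k)))" if "k \<in> {1..m}" for k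
  proof -
    have e: "m + k = (m - k) + 2*k" using that by auto
    have "(-1::real)^m * (-1)^k = (-1)^(m+k)" by (simp add: power_add)
    also have "\<dots> = (-1)^((m-k)+2*k)" by (subst e) (rule refl)
    also have "\<dots> = (-1)^(m-k)" by (simp add: power_add power_mult)
    finally have "(-1::real)^m * (-1)^k = (-1)^(m-k)" .
    thus ?thesis by (simp only: mult.assoc[symmetric])
  qed
  have bp: "?b (m+k) = ?b (m-k)" if "k \<in> {1..m}" for k
  proof -
    have c: "(2*m) choose (m+k) = (2*m) choose (m-k)"
      using that by (subst binomial_symmetric) (auto simp: algebra_simps)
    have e: "m + k = (m - k) + 2*k" using that by auto
    have "(-1::real)^(m+k) = (-1)^((m-k)+2*k)" by (subst e) (rule refl)
    also have "\<dots> = (-1)^(m-k)" by (simp add: power_add power_mult)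
    finally show ?thesis using c by simp
  qed
  have s1: "(\<Sum>i<m. ?b i) = (\<Sum>k=1..m. ?b (m-k))"
    by (rule sum.reindex_bij_witness[where i="\<lambda>k. m - k" and j="\<lambda>i. m - i"]) auto
  also have "\<dots> = (\<Sum>k=1..m. (-1)^m * ((-1)^k * real ((2*m) choose (m-k))))"
    by (rule sum.cong[OF refl bm])
  also have "\<dots> = (-1)^m * S" unfolding S_def by (rule sum_distrib_left[symmetric])
  finally have A: "(\<Sum>i<m. ?b i) = (-1)^m * S" .
  have "(\<Sum>i\<in>{m<..2*m}. ?b i) = (\<Sum>k=1..m. ?b (m+k))"
    by (rule sum.reindex_bij_witness[where i="\<lambda>k. m + k" and j="\<lambda>i. i - m"]) auto
  also have "\<dots> = (\<Sum>k=1..m. ?b (m-k))" by (rule sum.cong[OF refl bp])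
  finally have B: "(\<Sum>i\<in>{m<..2*m}. ?b i) = (-1)^m * S" using s1 A by simp
  have "0 = (-1)^m * (2 * S + real ((2*m) choose m))"
    using z dec A B by (simp add: algebra_simps)
  hence Z: "2 * S + real ((2*m) choose m) = 0" by simp
  have "(\<Sum>k=1..m. 2 * (-1)^(k+1) * real ((2*m) choose (m-k))) = (\<Sum>k=1..m. (-2) * ((-1)^k * real ((2*m) choose (m-k))))"
    by (rule sum.cong) auto
  also have "\<dots> = -2 * S" unfolding S_def by (rule sum_distrib_left[symmetric])
  finally show ?thesis using Z by linarith
qed

lemma cc_sum: "m \<ge> 1 \<Longrightarrow> (\<Sum>k=1..m. cc m k) = 1"
proof -
  assume m: "m \<ge> 1"
  have pos: "real ((2*m) choose m) > 0" by simp
  have "(\<Sum>k=1..m. cc m k) = (\<Sum>k=1..m. 2 * (-1)^(k+1) * real ((2*m) choose (m-k))) / real ((2*m) choose m)"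
    by (simp add: cc_ratio sum_divide_distrib)
  also have "\<dots> = 1" using binom_alt_half[OF m] pos by simp
  finally show ?thesis .
qed

lemma cc_sum_sq: "m \<ge> 2 \<Longrightarrow> (\<Sum>k=1..m. cc m k * real k ^ 2) = 0"
proof -
  assume m: "m \<ge> 2"
  have "(\<Sum>k=1..m. cc m k * (real m ^ 2 - real k ^ 2)) = (\<Sum>k=1..m-1. cc m k * (real m ^ 2 - real k ^ 2))"
  proof -
    have "{1..m} = insert m {1..m-1}" using m by auto
    moreover have "m \<notin> {1..m-1}" using m by auto
    ultimately show ?thesis by (simp add: sum.insert)
  qed
  also have "\<dots> = (\<Sum>k=1..m-1. real m ^ 2 * cc (m-1) k)"
    by (intro sum.cong refl cc_rec) auto
  also have "\<dots> = real m ^ 2" using cc_sum[of "m-1"] m by (simp add: sum_distrib_left[symmetric])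
  finally have "real m ^ 2 * (\<Sum>k=1..m. cc m k) - (\<Sum>k=1..m. cc m k * real k ^ 2) = real m ^ 2"
    by (simp add: algebra_simps sum_subtractf sum_distrib_left)
  thus ?thesis using cc_sum[of m] m by simp
qed

lemma cc_abs: "k \<le> m \<Longrightarrow> \<bar>cc m k\<bar> \<le> 2"
proof -
  assume k: "k \<le> m"
  have "real ((2*m) choose (m-k)) \<le> real ((2*m) choose m)"
    using binomial_maximum'[of m "m-k"] by simp
  moreover have "real ((2*m) choose m) > 0" by simp
  ultimately show ?thesis using k by (simp add: cc_ratio abs_mult field_simps)
qed

definition Fm :: "nat \<Rightarrow> real \<Rightarrow> real" where
  "Fm m x = 1 - (\<Sum>k=1..m. cc m k * exp (- (real k ^ 2 * x)))"

definition fm :: "nat \<Rightarrow> real \<Rightarrow> real" where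
  "fm m x = (\<Sum>k=1..m. cc m k * real k ^ 2 * exp (- (real k ^ 2 * x)))"

lemma Fm_deriv: "(Fm m has_real_derivative fm m x) (at x)"
  unfolding Fm_def fm_def
  by (auto intro!: derivative_eq_intros DERIV_sum simp: sum_negf[symmetric] algebra_simps)

lemma Fm_zero: "m \<ge> 1 \<Longrightarrow> Fm m 0 = 0"
  unfolding Fm_def using cc_sum by simp

lemma cc_1_1: "cc (Suc 0) (Suc 0) = 1" "cc 1 1 = 1"
  unfolding cc_def by (simp_all add: eval_nat_numeral)

lemma sum_split_last: "(m::nat) \<ge> 1 \<Longrightarrow> (\<Sum>k=1..m. g k) = (\<Sum>k=1..m-1. g k) + (g m :: real)"
proof -
  assume m: "m \<ge> 1"
  then obtain n where n: "m = Suc n" by (cases m) auto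
  have "{1..m} = insert m {1..m-1}" unfolding n by auto
  moreover have "m \<notin> {1..m-1}" using m by auto
  ultimately show ?thesis by (simp add: sum.insert)
qed

lemma fm_nonneg: "x \<ge> 0 \<Longrightarrow> fm m x \<ge> 0"
proof (induction m arbitrary: x)
  case 0
  then show ?case by (simp add: fm_def)
next
  case (Suc n)
  show ?case
  proof (cases "n = 0")
    case True
    then show ?thesis by (simp add: fm_def cc_1_1)
  next
    case False
    define m where "m = Suc n"
    have m2: "m \<ge> 2" using False m_def by auto
    define \<phi> where "\<phi> y = (\<Sum>k=1..m. cc m k * real k ^ 2 * exp ((real m ^ 2 - real k ^ 2) * y))" for y
    define \<phi>' where "\<phi>' y = (\<Sum>k=1..m. cc m k * real k ^ 2 * ((real m ^ 2 - real k ^ 2) * exp ((real m ^ 2 - real k ^ 2) * y)))" for y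
    have d: "(\<phi> has_real_derivative \<phi>' y) (at y)" for y
      unfolding \<phi>_def \<phi>'_def
      by (auto intro!: derivative_eq_intros DERIV_sum simp: algebra_simps)
    have \<phi>'_eq: "\<phi>' y = real m ^ 2 * exp (real m ^ 2 * y) * fm n y" for y
    proof -
      have "\<phi>' y = (\<Sum>k=1..m-1. cc m k * real k ^ 2 * ((real m ^ 2 - real k ^ 2) * exp ((real m ^ 2 - real k ^ 2) * y)))"
        unfolding \<phi>'_def using m2 by (subst sum_split_last) auto
      also have "\<dots> = (\<Sum>k=1..m-1. real m ^ 2 * exp (real m ^ 2 * y) * (cc (m-1) k * real k ^ 2 * exp (- (real k ^ 2 * y))))"
      proof (rule sum.cong[OF refl])
        fix k assume k: "k \<in> {1..m-1}"
        have r: "cc m k * (real m ^ 2 - real k ^ 2) = real m ^ 2 * cc (m-1) k"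
          using k m2 by (intro cc_rec) auto
        have e: "exp ((real m ^ 2 - real k ^ 2) * y) = exp (real m ^ 2 * y) * exp (- (real k ^ 2 * y))"
        proof -
          have "(real m ^ 2 - real k ^ 2) * y = real m ^ 2 * y + (- (real k ^ 2 * y))" by (simp add: algebra_simps)
          thus ?thesis by (simp only: exp_add)
        qed
        show "cc m k * real k ^ 2 * ((real m ^ 2 - real k ^ 2) * exp ((real m ^ 2 - real k ^ 2) * y)) =
              real m ^ 2 * exp (real m ^ 2 * y) * (cc (m-1) k * real k ^ 2 * exp (- (real k ^ 2 * y)))"
        proof -
          have "cc m k * real k ^ 2 * ((real m ^ 2 - real k ^ 2) * exp ((real m ^ 2 - real k ^ 2) * y))
              = (cc m k * (real m ^ 2 - real k ^ 2)) * (real k ^ 2 * exp (real m ^ 2 * y) * exp (- (real k ^ 2 * y)))"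
            unfolding e by (simp only: ac_simps)
          also have "\<dots> = (real m ^ 2 * cc (m-1) k) * (real k ^ 2 * exp (real m ^ 2 * y) * exp (- (real k ^ 2 * y)))"
            by (simp only: r)
          also have "\<dots> = real m ^ 2 * exp (real m ^ 2 * y) * (cc (m-1) k * real k ^ 2 * exp (- (real k ^ 2 * y)))"
            by (simp only: ac_simps)
          finally show ?thesis .
        qed
      qed
      also have "\<dots> = real m ^ 2 * exp (real m ^ 2 * y) * fm n y"
        unfolding fm_def m_def by (simp add: sum_distrib_left)
      finally show ?thesis .
    qed
    have \<phi>0: "\<phi> 0 = 0" unfolding \<phi>_def using cc_sum_sq[OF m2] by simp
    have "\<phi> 0 \<le> \<phi> x"
    proof (rule DERIV_nonneg_imp_nondecreasing[OF Suc.prems])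
      fix y :: real assume "0 \<le> y" "y \<le> x"
      thus "\<exists>d. (\<phi> has_real_derivative d) (at y) \<and> 0 \<le> d"
        using d[of y] Suc.IH[of y] by (intro exI[of _ "\<phi>' y"]) (auto simp: \<phi>'_eq)
    qed
    hence "\<phi> x \<ge> 0" using \<phi>0 by simp
    moreover have "fm m x = exp (- (real m ^ 2 * x)) * \<phi> x"
    proof -
      have "fm m x = (\<Sum>k=1..m. exp (- (real m ^ 2 * x)) * (cc m k * real k ^ 2 * exp ((real m ^ 2 - real k ^ 2) * x)))"
        unfolding fm_def
      proof (rule sum.cong[OF refl])
        fix k
        have "- (real k ^ 2 * x) = - (real m ^ 2 * x) + ((real m ^ 2 - real k ^ 2) * x)" by (simp add: algebra_simps)
        hence ee: "exp (- (real k ^ 2 * x)) = exp (- (real m ^ 2 * x)) * exp ((real m ^ 2 - real k ^ 2) * x)"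
          by (simp only: exp_add)
        show "cc m k * real k ^ 2 * exp (- (real k ^ 2 * x)) = exp (- (real m ^ 2 * x)) * (cc m k * real k ^ 2 * exp ((real m ^ 2 - real k ^ 2) * x))"
          unfolding ee by (simp only: ac_simps)
      qed
      thus ?thesis unfolding \<phi>_def by (simp add: sum_distrib_left)
    qed
    ultimately show ?thesis unfolding m_def by simp
  qed
qed

lemma Fm_nonneg: "x \<ge> 0 \<Longrightarrow> Fm m x \<ge> 0"
proof (cases "m = 0")
  case True then show ?thesis by (simp add: Fm_def)
next
  case False
  assume x: "x \<ge> 0"
  have "Fm m 0 \<le> Fm m x"
    by (rule DERIV_nonneg_imp_nondecreasing[OF x]) (use Fm_deriv fm_nonneg in blast)
  thus ?thesis using Fm_zero False by simp
qed

lemma Fm_step: "m \<ge> 1 \<Longrightarrow> Fm (m-1) x - Fm m x = fm m x / real m ^ 2"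
proof -
  assume m: "m \<ge> 1"
  have "Fm (m-1) x - Fm m x = (\<Sum>k=1..m. cc m k * exp (- (real k ^ 2 * x))) - (\<Sum>k=1..m-1. cc (m-1) k * exp (- (real k ^ 2 * x)))"
    unfolding Fm_def by simp
  also have "(\<Sum>k=1..m-1. cc (m-1) k * exp (- (real k ^ 2 * x))) = (\<Sum>k=1..m-1. (cc m k - cc m k * real k ^ 2 / real m ^ 2) * exp (- (real k ^ 2 * x)))"
  proof (rule sum.cong[OF refl])
    fix k assume k: "k \<in> {1..m-1}"
    have r: "cc m k * (real m ^ 2 - real k ^ 2) = real m ^ 2 * cc (m-1) k"
      using k m by (intro cc_rec) auto
    have "cc (m-1) k = cc m k - cc m k * real k ^ 2 / real m ^ 2"
      using r m by (simp add: field_simps)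
    thus "cc (m-1) k * exp (- (real k ^ 2 * x)) = (cc m k - cc m k * real k ^ 2 / real m ^ 2) * exp (- (real k ^ 2 * x))"
      by simp
  qed
  also have "(\<Sum>k=1..m. cc m k * exp (- (real k ^ 2 * x))) - \<dots> = (\<Sum>k=1..m. cc m k * real k ^ 2 / real m ^ 2 * exp (- (real k ^ 2 * x)))"
  proof -
    have mm: "cc m m * real m ^ 2 / real m ^ 2 = cc m m" using m by simp
    show ?thesis
      unfolding sum_split_last[OF m, of "\<lambda>k. cc m k * exp (- (real k ^ 2 * x))"]
        sum_split_last[OF m, of "\<lambda>k. cc m k * real k ^ 2 / real m ^ 2 * exp (- (real k ^ 2 * x))"]
      by (simp add: sum_subtractf algebra_simps mm)
  qed
  also have "\<dots> = fm m x / real m ^ 2"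
    unfolding fm_def by (simp add: sum_divide_distrib algebra_simps)
  finally show ?thesis .
qed

lemma Fm_antimono: "x \<ge> 0 \<Longrightarrow> j \<le> m \<Longrightarrow> Fm m x \<le> Fm j x"
proof (induction m)
  case 0 then show ?case by simp
next
  case (Suc n)
  show ?case
  proof (cases "j = Suc n")
    case True then show ?thesis by simp
  next
    case False
    hence "Fm n x \<le> Fm j x" using Suc by auto
    moreover have "Fm (Suc n) x \<le> Fm n x"
    proof -
      have "fm (Suc n) x / real (Suc n) ^ 2 \<ge> 0"
        using fm_nonneg[OF Suc.prems(1), of "Suc n"] by simp
      thus ?thesis using Fm_step[of "Suc n" x] by simp
    qed
    ultimately show ?thesis by simp
  qed
qed

lemma Fm_1: "Fm 1 x = 1 - exp (- x)"
  unfolding Fm_def by (simp add: cc_1_1)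

definition gt :: "real \<Rightarrow> nat \<Rightarrow> real" where
  "gt x k = (if k = 0 then 0 else 2 * (-1)^(k+1) * exp (- (real k ^ 2 * x)))"
definition ft :: "real \<Rightarrow> nat \<Rightarrow> real" where
  "ft x k = 2 * (-1)^(k+1) * real k ^ 2 * exp (- (real k ^ 2 * x))"
definition Mb :: "real \<Rightarrow> nat \<Rightarrow> real" where
  "Mb a k = 2 * real k ^ 2 * exp (- (real k ^ 2 * a))"
definition Gs :: "real \<Rightarrow> real" where
  "Gs x = 1 - (\<Sum>k. gt x k)"
definition fs :: "real \<Rightarrow> real" where
  "fs x = (\<Sum>k. ft x k)"

lemma exp_ge_sq: "y \<ge> 0 \<Longrightarrow> y ^ 2 / 4 \<le> exp (y::real)"
proof -
  assume y: "y \<ge> 0"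
  have "y / 2 \<le> exp (y/2)" using exp_ge_add_one_self[of "y/2"] by linarith
  hence "(y/2)^2 \<le> exp (y/2) ^ 2" using y by (intro power_mono) auto
  also have "exp (y/2) ^ 2 = exp y" by (simp add: exp_double[symmetric])
  finally show ?thesis by (simp add: power_divide)
qed

lemma Mb_bound: "a > 0 \<Longrightarrow> Mb a k \<le> 8 / a^2 * inverse (real k ^ 2)"
proof (cases "k = 0")
  case True then show ?thesis by (simp add: Mb_def)
next
  case False
  assume a: "a > 0"
  define y where "y = real k ^ 2 * a"
  have y: "y > 0" using a False by (simp add: y_def)
  have e: "y^2/4 \<le> exp y" using exp_ge_sq y by simp
  have "Mb a k = 2 * real k ^ 2 / exp y" by (simp add: Mb_def y_def exp_minus field_simps)
  also have "\<dots> \<le> 2 * real k ^ 2 / (y^2/4)"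
    using e y False by (intro divide_left_mono) auto
  also have "\<dots> = 8 / a^2 * inverse (real k ^ 2)"
    using False a by (simp add: y_def field_simps power2_eq_square)
  finally show ?thesis .
qed

lemma Mb_nonneg: "Mb a k \<ge> 0" by (simp add: Mb_def)

lemma summable_Mb: "a > 0 \<Longrightarrow> summable (Mb a)"
proof -
  assume a: "a > 0"
  have "summable (\<lambda>k. 8 / a^2 * inverse (real k ^ 2))"
    by (intro summable_mult inverse_power_summable) auto
  thus ?thesis
    by (rule summable_comparison_test'[where N=0]) (use Mb_bound[OF a] Mb_nonneg in auto)
qed

lemma Mb_mono: "a \<le> x \<Longrightarrow> Mb x k \<le> Mb a k"
  unfolding Mb_def by (intro mult_left_mono) (auto intro: mult_left_mono)

lemma gt_bound: "0 \<le> a \<Longrightarrow> a \<le> x \<Longrightarrow> \<bar>gt x k\<bar> \<le> Mb a k"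
proof -
  assume "0 \<le> a" "a \<le> x"
  have "\<bar>gt x k\<bar> \<le> Mb x k"
  proof (cases "k = 0")
    case False
    hence "real k ^ 2 \<ge> 1" by simp
    hence "2 * exp (- (real k ^ 2 * x)) \<le> 2 * real k ^ 2 * exp (- (real k ^ 2 * x))" by simp
    thus ?thesis using False by (simp add: gt_def Mb_def abs_mult)
  qed (simp add: gt_def Mb_def)
  thus ?thesis using Mb_mono[OF \<open>a \<le> x\<close>, of k] by simp
qed

lemma ft_bound: "a \<le> x \<Longrightarrow> \<bar>ft x k\<bar> \<le> Mb a k"
proof -
  assume "a \<le> x"
  have "\<bar>ft x k\<bar> = Mb x k" by (simp add: ft_def Mb_def abs_mult)
  thus ?thesis using Mb_mono[OF \<open>a \<le> x\<close>, of k] by simp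
qed

lemma fact_sub_prod: "k \<le> m \<Longrightarrow> (fact m :: real) = fact (m-k) * (\<Prod>i<k. real m - real i)"
proof (induction k)
  case 0 then show ?case by simp
next
  case (Suc k)
  have e: "m - k = Suc (m - Suc k)" using Suc.prems by auto
  have "(fact (m-k) :: real) = (real m - real k) * fact (m - Suc k)"
    unfolding e using Suc.prems by (simp add: of_nat_diff)
  with Suc show ?case by (simp add: algebra_simps)
qed

lemma fact_add_prod: "(fact (m+k) :: real) = fact m * (\<Prod>i<k. real m + 1 + real i)"
  by (induction k) (auto simp: algebra_simps)

lemma cc_prod: "k \<le> m \<Longrightarrow> cc m k = 2 * (-1)^(k+1) * (\<Prod>i<k. (real m - real i) / (real m + 1 + real i))"
proof -
  assume k: "k \<le> m"
  have nz: "(fact (m-k)::real) \<noteq> 0" "(fact m::real) \<noteq> 0" by auto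
  have q: "(\<Prod>i<k. real m + 1 + real i) \<noteq> 0" by (auto simp: add_pos_nonneg)
  have "cc m k = 2 * (-1)^(k+1) * (fact (m-k) * (\<Prod>i<k. real m - real i)) * fact m / (fact (m-k) * (fact m * (\<Prod>i<k. real m + 1 + real i)))"
    unfolding cc_def power2_eq_square
    by (subst (2) fact_sub_prod[OF k], subst fact_add_prod) (simp add: mult.assoc)
  also have "\<dots> = 2 * (-1)^(k+1) * ((\<Prod>i<k. real m - real i) / (\<Prod>i<k. real m + 1 + real i))"
    using nz q by (simp add: field_simps)
  also have "(\<Prod>i<k. real m - real i) / (\<Prod>i<k. real m + 1 + real i) = (\<Prod>i<k. (real m - real i) / (real m + 1 + real i))"
    by (simp add: prod_dividef)
  finally show ?thesis .
qed

lemma cc_lim: "(\<lambda>m. cc m k) \<longlonglongrightarrow> 2 * (-1)^(k+1)"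
proof -
  have fac: "(\<lambda>m. (real m - real i) / (real m + 1 + real i)) \<longlonglongrightarrow> 1" for i
  proof -
    have inf: "filterlim (\<lambda>m. (1 + real i) + real m) at_infinity sequentially"
      by (intro filterlim_at_top_imp_at_infinity filterlim_tendsto_add_at_top[OF tendsto_const filterlim_real_sequentially])
    have "(\<lambda>m. (2 * real i + 1) / ((1 + real i) + real m)) \<longlonglongrightarrow> 0"
      by (rule tendsto_divide_0[OF tendsto_const inf])
    hence "(\<lambda>m. 1 - (2 * real i + 1) / ((1 + real i) + real m)) \<longlonglongrightarrow> 1 - 0"
      by (intro tendsto_diff tendsto_const)
    moreover have "1 - (2 * real i + 1) / ((1 + real i) + real m) = (real m - real i) / (real m + 1 + real i)" for m
      by (simp add: field_simps add_pos_nonneg)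
    ultimately show ?thesis by simp
  qed
  have "(\<lambda>m. 2 * (-1)^(k+1) * (\<Prod>i<k. (real m - real i) / (real m + 1 + real i))) \<longlonglongrightarrow> 2 * (-1)^(k+1) * (\<Prod>i<k. 1)"
    by (intro tendsto_mult tendsto_const tendsto_prod fac)
  hence L: "(\<lambda>m. 2 * (-1)^(k+1) * (\<Prod>i<k. (real m - real i) / (real m + 1 + real i))) \<longlonglongrightarrow> 2 * (-1)^(k+1)"
    by simp
  show ?thesis
    by (rule Lim_transform_eventually[OF L]) (auto simp: eventually_sequentially cc_prod intro!: exI[of _ k])
qed

lemma tannery_F:
  assumes x: "x > 0"
  shows "(\<lambda>m. Fm m x) \<longlonglongrightarrow> Gs x"
proof -
  define a where "a k m = (if k \<in> {1..m} then cc m k * exp (- (real k ^ 2 * x)) else 0)" for k m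
  have lim: "(\<lambda>m. a k m) \<longlonglongrightarrow> gt x k" for k
  proof (cases "k = 0")
    case True then show ?thesis by (simp add: a_def gt_def)
  next
    case False
    have "(\<lambda>m. cc m k * exp (- (real k ^ 2 * x))) \<longlonglongrightarrow> 2 * (-1)^(k+1) * exp (- (real k ^ 2 * x))"
      by (intro tendsto_mult cc_lim tendsto_const)
    hence "(\<lambda>m. cc m k * exp (- (real k ^ 2 * x))) \<longlonglongrightarrow> gt x k" using False by (simp add: gt_def)
    thus ?thesis
      by (rule Lim_transform_eventually) (use False in \<open>auto simp: a_def eventually_sequentially intro!: exI[of _ k]\<close>)
  qed
  have bound: "norm (a k m) \<le> Mb x k" for k m
  proof (cases "k \<in> {1..m}")
    case True
    have "\<bar>cc m k\<bar> \<le> 2" using True cc_abs by auto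
    hence "\<bar>cc m k\<bar> * exp (- (real k ^ 2 * x)) \<le> 2 * exp (- (real k ^ 2 * x))" by (intro mult_right_mono) auto
    also have "\<dots> \<le> 2 * real k ^ 2 * exp (- (real k ^ 2 * x))" using True by simp
    finally show ?thesis using True by (simp add: a_def Mb_def abs_mult)
  qed (use Mb_nonneg in \<open>auto simp: a_def\<close>)
  have T: "((\<lambda>m. suminf (\<lambda>k. a k m)) \<longlongrightarrow> suminf (gt x)) sequentially"
    using tannerys_theorem[where a=a and b="gt x" and M="Mb x" and F=sequentially] lim bound summable_Mb[OF x]
    by (auto intro!: always_eventually)
  have "suminf (\<lambda>k. a k m) = (\<Sum>k=1..m. cc m k * exp (- (real k ^ 2 * x)))" for m
  proof -
    have "(\<lambda>k. a k m) sums (\<Sum>k\<in>{1..m}. a k m)" by (rule sums_finite) (auto simp: a_def)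
    thus ?thesis by (simp add: sums_iff a_def)
  qed
  hence "(\<lambda>m. 1 - suminf (\<lambda>k. a k m)) = (\<lambda>m. Fm m x)" by (simp add: Fm_def)
  moreover have "(\<lambda>m. 1 - suminf (\<lambda>k. a k m)) \<longlonglongrightarrow> Gs x" unfolding Gs_def by (intro tendsto_diff tendsto_const T)
  ultimately show ?thesis by simp
qed

lemma tannery_f:
  assumes x: "x > 0"
  shows "(\<lambda>m. fm m x) \<longlonglongrightarrow> fs x"
proof -
  define a where "a k m = (if k \<in> {1..m} then cc m k * real k ^ 2 * exp (- (real k ^ 2 * x)) else 0)" for k m
  have lim: "(\<lambda>m. a k m) \<longlonglongrightarrow> ft x k" for k
  proof (cases "k = 0")
    case True then show ?thesis by (simp add: a_def ft_def)
  next
    case False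
    have "(\<lambda>m. cc m k * real k ^ 2 * exp (- (real k ^ 2 * x))) \<longlonglongrightarrow> ft x k"
      unfolding ft_def by (intro tendsto_mult cc_lim tendsto_const)
    thus ?thesis
      by (rule Lim_transform_eventually) (use False in \<open>auto simp: a_def eventually_sequentially intro!: exI[of _ k]\<close>)
  qed
  have bound: "norm (a k m) \<le> Mb x k" for k m
  proof (cases "k \<in> {1..m}")
    case True
    have "\<bar>cc m k\<bar> \<le> 2" using True cc_abs by auto
    hence "\<bar>cc m k\<bar> * (real k ^ 2 * exp (- (real k ^ 2 * x))) \<le> 2 * (real k ^ 2 * exp (- (real k ^ 2 * x)))"
      by (intro mult_right_mono) auto
    thus ?thesis using True by (simp add: a_def Mb_def abs_mult mult.assoc)
  qed (use Mb_nonneg in \<open>auto simp: a_def\<close>)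
  have T: "((\<lambda>m. suminf (\<lambda>k. a k m)) \<longlongrightarrow> suminf (ft x)) sequentially"
    using tannerys_theorem[where a=a and b="ft x" and M="Mb x" and F=sequentially] lim bound summable_Mb[OF x]
    by (auto intro!: always_eventually)
  have "suminf (\<lambda>k. a k m) = fm m x" for m
  proof -
    have "(\<lambda>k. a k m) sums (\<Sum>k\<in>{1..m}. a k m)" by (rule sums_finite) (auto simp: a_def)
    thus ?thesis by (simp add: sums_iff a_def fm_def)
  qed
  thus ?thesis using T by (simp add: fs_def)
qed

lemma exp_neg_lim: "(c::real) > 0 \<Longrightarrow> ((\<lambda>x. exp (- (c * x))) \<longlongrightarrow> 0) at_top"
proof -
  assume c: "c > 0"
  have "filterlim (\<lambda>x. c * x) at_top at_top"
    by (rule filterlim_tendsto_pos_mult_at_top[OF tendsto_const c filterlim_ident])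
  hence "filterlim (\<lambda>x. - (c * x)) at_bot at_top" by (simp add: filterlim_uminus_at_bot)
  thus ?thesis by (rule filterlim_compose[OF exp_at_bot])
qed

lemma summable_gt: "x > 0 \<Longrightarrow> summable (gt x)"
  by (rule summable_comparison_test'[OF summable_Mb, where N=0]) (use gt_bound in auto)

lemma summable_ft: "x > 0 \<Longrightarrow> summable (ft x)"
  by (rule summable_comparison_test'[OF summable_Mb, where N=0]) (use ft_bound in auto)

lemma gt_deriv: "((\<lambda>y. gt y k) has_real_derivative (- ft y k)) (at y)"
proof (cases "k = 0")
  case True then show ?thesis by (simp add: gt_def ft_def)
next
  case False
  then show ?thesis unfolding gt_def ft_def
    by (auto intro!: derivative_eq_intros simp: algebra_simps)
qed

lemma Gs_deriv:
  assumes x: "x > 0"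
  shows "(Gs has_real_derivative fs x) (at x)" "isCont fs x"
proof -
  define S where "S = {x/2<..}"
  have S: "convex S" "open S" "x \<in> S" using x by (auto simp: S_def)
  have bnd: "\<And>n y. y \<in> S \<Longrightarrow> norm (- ft y n) \<le> Mb (x/2) n"
    using ft_bound by (auto simp: S_def)
  have uc: "uniformly_convergent_on S (\<lambda>n y. \<Sum>i<n. - ft y i)"
    by (rule Weierstrass_m_test'[OF bnd summable_Mb]) (use x in auto)
  have "((\<lambda>y. \<Sum>n. gt y n) has_field_derivative (\<Sum>n. - ft x n)) (at x)"
    by (rule has_field_derivative_series'(2)[where S=S and f="\<lambda>k y. gt y k" and f'="\<lambda>k y. - ft y k", OF S(1) _ uc S(3) summable_gt[OF x]])
       (use gt_deriv S in \<open>auto intro: has_field_derivative_at_within simp: interior_open\<close>)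
  hence "((\<lambda>y. 1 - (\<Sum>n. gt y n)) has_field_derivative (0 - (\<Sum>n. - ft x n))) (at x)"
    by (intro derivative_intros)
  moreover have "0 - (\<Sum>n. - ft x n) = fs x"
    using suminf_minus[OF summable_ft[OF x]] by (simp add: fs_def)
  ultimately show "(Gs has_real_derivative fs x) (at x)" by (simp add: Gs_def[abs_def])
  have bnd2: "\<And>n y. y \<in> S \<Longrightarrow> norm (ft y n) \<le> Mb (x/2) n"
    using ft_bound by (auto simp: S_def)
  have ul: "uniform_limit S (\<lambda>n y. \<Sum>i<n. ft y i) (\<lambda>y. suminf (\<lambda>i. ft y i)) sequentially"
    by (rule Weierstrass_m_test[OF bnd2 summable_Mb]) (use x in auto)
  have "continuous_on S (\<lambda>y. suminf (\<lambda>i. ft y i))"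
    by (rule uniform_limit_theorem[OF _ ul]) (auto intro!: always_eventually continuous_intros simp: ft_def)
  hence "continuous_on S fs" by (simp add: fs_def[abs_def])
  thus "isCont fs x" using S continuous_on_eq_continuous_at by blast
qed

lemma Gs_bounds: "x > 0 \<Longrightarrow> 0 \<le> Gs x \<and> Gs x \<le> 1 - exp (- x)"
proof -
  assume x: "x > 0"
  have L: "(\<lambda>m. Fm m x) \<longlonglongrightarrow> Gs x" by (rule tannery_F[OF x])
  have "0 \<le> Gs x" by (rule LIMSEQ_le_const[OF L]) (use Fm_nonneg x in \<open>auto intro: less_imp_le\<close>)
  moreover have "Gs x \<le> Fm 1 x"
    by (rule LIMSEQ_le_const2[OF L]) (use Fm_antimono x in \<open>auto intro!: exI[of _ 1]\<close>)
  moreover have "Fm (Suc 0) x = 1 - exp (- x)" using Fm_1[of x] by simp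
  ultimately show ?thesis by simp
qed

lemma fs_nonneg: "x > 0 \<Longrightarrow> fs x \<ge> 0"
  by (rule LIMSEQ_le_const[OF tannery_f]) (use fm_nonneg in \<open>auto intro: less_imp_le\<close>)

lemma Gs_lim0: "(Gs \<longlongrightarrow> 0) (at_right 0)"
proof (rule tendsto_sandwich[where f="\<lambda>_. 0" and h="\<lambda>x. 1 - exp (- x)"])
  show "\<forall>\<^sub>F x in at_right 0. 0 \<le> Gs x"
    using eventually_at_right_less[of "0::real"] by eventually_elim (use Gs_bounds in auto)
  show "\<forall>\<^sub>F x in at_right 0. Gs x \<le> 1 - exp (- x)"
    using eventually_at_right_less[of "0::real"] by eventually_elim (use Gs_bounds in auto)
  show "((\<lambda>_. 0) \<longlongrightarrow> (0::real)) (at_right 0)" by simp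
  have "((\<lambda>x. 1 - exp (- x)) \<longlongrightarrow> 1 - exp (- 0)) (at_right (0::real))"
    by (intro tendsto_intros)
  thus "((\<lambda>x. 1 - exp (- x)) \<longlongrightarrow> (0::real)) (at_right 0)" by simp
qed

lemma Gs_lim_top: "(Gs \<longlongrightarrow> 1) at_top"
proof -
  have lim: "((\<lambda>x. gt x k) \<longlongrightarrow> 0) at_top" for k
  proof (cases "k = 0")
    case True then show ?thesis by (simp add: gt_def)
  next
    case False
    have "((\<lambda>x. 2 * (-1)^(k+1) * exp (- (real k ^ 2 * x))) \<longlongrightarrow> 2 * (-1)^(k+1) * 0) at_top"
      by (intro tendsto_mult tendsto_const exp_neg_lim) (use False in simp)
    thus ?thesis using False by (simp add: gt_def)
  qed
  have bound: "\<forall>\<^sub>F (k, x) in at_top \<times>\<^sub>F at_top. norm (gt x k) \<le> Mb 1 k"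
  proof -
    have "\<forall>\<^sub>F kx in (at_top::nat filter) \<times>\<^sub>F at_top. True \<and> (snd kx::real) \<ge> 1"
      by (rule eventually_prodI) (auto simp: eventually_ge_at_top)
    thus ?thesis by (rule eventually_mono) (use gt_bound in auto)
  qed
  have "((\<lambda>x. suminf (\<lambda>k. gt x k)) \<longlongrightarrow> suminf (\<lambda>k. 0::real)) at_top"
    using tannerys_theorem[where a="\<lambda>k x. gt x k" and b="\<lambda>k. 0" and M="Mb 1" and F=at_top] lim bound summable_Mb[of 1]
    by auto
  hence "((\<lambda>x. 1 - suminf (\<lambda>k. gt x k)) \<longlongrightarrow> 1 - 0) at_top"
    by (intro tendsto_diff tendsto_const) simp
  thus ?thesis by (simp add: Gs_def[abs_def])
qed

lemma powi_nat: "((-1::real) powi (int n + 1)) = (-1)^(n+1)"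
proof -
  have "int n + 1 = int (n+1)" by simp
  thus ?thesis by (simp only: power_int_of_nat)
qed

lemma powi_neg: "((-1::real) powi (- int (Suc n) + 1)) = (-1)^(Suc n + 1)"
proof -
  have "- int (Suc n) + 1 = - int n" by simp
  hence "((-1::real) powi (- int (Suc n) + 1)) = inverse ((-1) powi int n)" by (simp add: power_int_minus)
  also have "\<dots> = inverse ((-1)^n)" by (simp only: power_int_of_nat)
  also have "\<dots> = (-1)^n" by (cases "even n") auto
  also have "\<dots> = (-1)^(Suc n + 1)" by simp
  finally show ?thesis .
qed

lemma tau_density_eq: "tau_density x = (if 0 < x then fs x else 0)"
proof (cases "0 < x")
  case False then show ?thesis by (simp add: tau_density_def)
next
  case x: True
  define g where "g k = (-1) powi (k+1) * (real_of_int k)^2 * exp (- ((real_of_int k)^2 * x))" for k :: int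
  have ns: "summable (\<lambda>n. norm (ft x n / 2))"
  proof (rule summable_comparison_test'[OF summable_Mb[OF x], where N=0])
    fix n :: nat
    show "norm (norm (ft x n / 2)) \<le> Mb x n" using ft_bound[of x x n] Mb_nonneg[of x n] by simp
  qed
  have ns2: "summable (\<lambda>n. norm (ft x (Suc n) / 2))"
    using ns by (subst summable_Suc_iff) 
  have s1: "(\<lambda>n. ft x n / 2) sums (fs x / 2)"
    by (intro sums_divide) (use summable_ft[OF x] in \<open>simp add: fs_def summable_sums\<close>)
  have s2: "(\<lambda>n. ft x (Suc n) / 2) sums (fs x / 2)"
    using s1 sums_Suc_iff[of "\<lambda>n. ft x n / 2" "fs x / 2"] by (simp add: ft_def)
  have A: "(g has_sum fs x / 2) (range int)"
  proof -
    have "((g \<circ> int) has_sum fs x / 2) UNIV"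
    proof -
      have "(g \<circ> int) = (\<lambda>n. ft x n / 2)"
        by (rule ext) (simp add: g_def ft_def powi_nat)
      thus ?thesis using norm_summable_imp_has_sum[OF ns s1] by simp
    qed
    thus ?thesis by (subst has_sum_reindex) auto
  qed
  have B: "(g has_sum fs x / 2) (range (\<lambda>n. - int (Suc n)))"
  proof -
    have "((g \<circ> (\<lambda>n. - int (Suc n))) has_sum fs x / 2) UNIV"
    proof -
      have "(g \<circ> (\<lambda>n. - int (Suc n))) = (\<lambda>n. ft x (Suc n) / 2)"
      proof -
        have sq: "\<And>n. (-1 - real n)^2 = (1 + real n)^2" by (simp add: power2_eq_square algebra_simps)
        show ?thesis by (rule ext) (simp only: g_def ft_def powi_neg comp_def, simp add: sq)
      qed
      thus ?thesis using norm_summable_imp_has_sum[OF ns2 s2] by simp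
    qed
    thus ?thesis by (subst has_sum_reindex) (auto simp: inj_on_def)
  qed
  have U: "range int \<union> range (\<lambda>n. - int (Suc n)) = (UNIV :: int set)"
  proof -
    have "k \<in> range int \<union> range (\<lambda>n. - int (Suc n))" for k :: int
    proof (cases "k \<ge> 0")
      case True then show ?thesis by (auto intro: image_eqI[of _ _ "nat k"])
    next
      case False
      hence "k = - int (Suc (nat (- k - 1)))" by simp
      thus ?thesis by blast
    qed
    thus ?thesis by blast
  qed
  have "(g has_sum fs x / 2 + fs x / 2) (range int \<union> range (\<lambda>n. - int (Suc n)))"
    by (rule has_sum_Un_disjoint[OF A B]) auto
  hence "(g has_sum fs x) UNIV" unfolding U by simp
  hence "infsum g UNIV = fs x" by (rule infsumI)
  thus ?thesis using x by (simp add: tau_density_def g_def[abs_def])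
qed

lemma td_nonneg: "tau_density x \<ge> 0"
  by (simp add: tau_density_eq fs_nonneg)

lemma td_eq_ind: "tau_density x = indicator {0<..} x *\<^sub>R fs x"
  by (simp add: tau_density_eq indicator_def)

lemma fs_cont: "continuous_on {0<..} fs"
  using Gs_deriv(2) by (intro continuous_at_imp_continuous_on) auto

lemma td_meas: "tau_density \<in> borel_measurable lborel"
proof -
  have "(\<lambda>x. indicator {0<..} x *\<^sub>R fs x) \<in> borel_measurable borel"
    by (rule borel_measurable_continuous_on_indicator[OF _ fs_cont]) auto
  thus ?thesis unfolding td_eq_ind[abs_def] by simp
qed

lemma fs_FTC: "set_integrable lborel (einterval 0 \<infinity>) fs" "(LBINT x=0..\<infinity>. fs x) = 1 - 0"
proof -
  have D: "\<And>x. 0 < ereal x \<Longrightarrow> ereal x < \<infinity> \<Longrightarrow> DERIV Gs x :> fs x" using Gs_deriv(1) by auto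
  have C: "\<And>x. 0 < ereal x \<Longrightarrow> ereal x < \<infinity> \<Longrightarrow> isCont fs x" using Gs_deriv(2) by auto
  have N: "AE x in lborel. 0 < ereal x \<longrightarrow> ereal x < \<infinity> \<longrightarrow> 0 \<le> fs x" using fs_nonneg by auto
  have A: "((Gs \<circ> real_of_ereal) \<longlongrightarrow> 0) (at_right 0)"
    unfolding zero_ereal_def ereal_tendsto_simps by (rule Gs_lim0)
  have B: "((Gs \<circ> real_of_ereal) \<longlongrightarrow> 1) (at_left \<infinity>)"
    unfolding ereal_tendsto_simps by (rule Gs_lim_top)
  show "set_integrable lborel (einterval 0 \<infinity>) fs" "(LBINT x=0..\<infinity>. fs x) = 1 - 0"
    using interval_integral_FTC_nonneg[OF _ D C N A B] by auto
qed

lemma fs_FTC_x: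
  assumes x: "x > 0"
  shows "(LBINT y=0..ereal x. fs y) = Gs x - 0"
proof -
  have D: "\<And>y. 0 < ereal y \<Longrightarrow> ereal y < ereal x \<Longrightarrow> DERIV Gs y :> fs y" using Gs_deriv(1) by auto
  have C: "\<And>y. 0 < ereal y \<Longrightarrow> ereal y < ereal x \<Longrightarrow> isCont fs y" using Gs_deriv(2) by auto
  have N: "AE y in lborel. 0 < ereal y \<longrightarrow> ereal y < ereal x \<longrightarrow> 0 \<le> fs y" using fs_nonneg by auto
  have A: "((Gs \<circ> real_of_ereal) \<longlongrightarrow> 0) (at_right 0)"
    unfolding zero_ereal_def ereal_tendsto_simps by (rule Gs_lim0)
  have "isCont Gs x" using Gs_deriv(1)[OF x] by (rule DERIV_isCont)
  hence "(Gs \<longlongrightarrow> Gs x) (at_left x)" unfolding isCont_def by (rule filterlim_mono) (auto simp: at_le)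
  hence B: "((Gs \<circ> real_of_ereal) \<longlongrightarrow> Gs x) (at_left (ereal x))"
    unfolding ereal_tendsto_simps .
  show ?thesis using interval_integral_FTC_nonneg[OF _ D C N A B] x by auto
qed

lemma td_integrable: "integrable lborel tau_density" and td_integral: "integral\<^sup>L lborel tau_density = 1"
proof -
  have e: "einterval 0 \<infinity> = {0<..}" unfolding zero_ereal_def by (rule einterval_eq_Ici)
  show "integrable lborel tau_density"
    using fs_FTC(1) unfolding e set_integrable_def td_eq_ind[abs_def] .
  have "(LBINT x=0..\<infinity>. fs x) = (LINT x|lborel. indicator {0<..} x *\<^sub>R fs x)"
    unfolding interval_lebesgue_integral_def set_lebesgue_integral_def e by simp
  thus "integral\<^sup>L lborel tau_density = 1" using fs_FTC(2) unfolding td_eq_ind[abs_def] by simp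
qed

lemma emeasure_tau: "A \<in> sets borel \<Longrightarrow> emeasure tau_law A = ennreal (LINT y|lborel. tau_density y * indicator A y)"
proof -
  assume A: "A \<in> sets borel"
  have "emeasure tau_law A = (\<integral>\<^sup>+ y. ennreal (tau_density y) * indicator A y \<partial>lborel)"
    unfolding tau_law_def using A td_meas by (subst emeasure_density) (auto simp: mult.commute)
  also have "\<dots> = (\<integral>\<^sup>+ y. ennreal (tau_density y * indicator A y) \<partial>lborel)"
    by (rule nn_integral_cong) (auto simp: indicator_def)
  also have "\<dots> = ennreal (LINT y|lborel. tau_density y * indicator A y)"
  proof (rule nn_integral_eq_integral)
    have "integrable lborel (\<lambda>y. indicator A y *\<^sub>R tau_density y)"
      using A td_integrable by (intro integrable_mult_indicator) auto
    thus "integrable lborel (\<lambda>y. tau_density y * indicator A y)" by (simp add: mult.commute)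
  qed (auto simp: td_nonneg)
  finally show ?thesis .
qed

lemma measure_tau: "A \<in> sets borel \<Longrightarrow> measure tau_law A = (LINT y|lborel. tau_density y * indicator A y)"
proof -
  assume A: "A \<in> sets borel"
  have "0 \<le> (LINT y|lborel. tau_density y * indicator A y)" by (intro integral_nonneg_AE) (auto simp: td_nonneg)
  thus ?thesis using emeasure_tau[OF A] by (simp add: measure_def)
qed

lemma tau_prob: "prob_space tau_law"
proof
  have "emeasure tau_law UNIV = ennreal (LINT y|lborel. tau_density y)"
    using emeasure_tau[of UNIV] by simp
  thus "emeasure tau_law (space tau_law) = 1" using td_integral by (simp add: tau_law_def)
qed

lemma cdf_tau: "cdf tau_law x = (if x \<le> 0 then 0 else Gs x)"
proof (cases "x \<le> 0")
  case True
  have "(\<lambda>y. tau_density y * indicator {..x} y) = (\<lambda>_. 0)"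
    using True by (auto simp: tau_density_eq indicator_def)
  then show ?thesis using True by (simp add: cdf_def measure_tau)
next
  case False
  hence x: "x > 0" by simp
  have e: "einterval 0 (ereal x) = {0<..<x}" unfolding zero_ereal_def by (rule einterval_eq_Icc)
  have "cdf tau_law x = (LINT y|lborel. tau_density y * indicator {..x} y)"
    by (simp add: cdf_def measure_tau)
  also have "\<dots> = (LINT y|lborel. indicator {0<..<x} y *\<^sub>R fs y)"
  proof (rule integral_cong_AE)
    show "AE y in lborel. tau_density y * indicator {..x} y = indicator {0<..<x} y *\<^sub>R fs y"
      using AE_lborel_singleton[of x] by eventually_elim (auto simp: tau_density_eq indicator_def)
  next
    have "(\<lambda>y. indicator {0<..<x} y *\<^sub>R fs y) \<in> borel_measurable borel"
      by (rule borel_measurable_continuous_on_indicator) (auto intro: continuous_on_subset[OF fs_cont])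
    thus "(\<lambda>y. indicator {0<..<x} y *\<^sub>R fs y) \<in> borel_measurable lborel" by simp
  qed (use td_meas in auto)
  also have "\<dots> = (LBINT y=0..ereal x. fs y)"
    unfolding interval_lebesgue_integral_def set_lebesgue_integral_def e using x by simp
  also have "\<dots> = Gs x" using fs_FTC_x[OF x] by simp
  finally show ?thesis using x by simp
qed

definition fp :: "nat \<Rightarrow> real \<Rightarrow> real" where
  "fp m x = indicator {0<..} x *\<^sub>R fm m x"

lemma fm_cont: "isCont (fm m) x"
  unfolding fm_def by (intro continuous_intros)

lemma fp_nonneg: "fp m x \<ge> 0"
  by (simp add: fp_def indicator_def fm_nonneg)

lemma fp_meas: "fp m \<in> borel_measurable lborel"
proof -
  have "(\<lambda>x. indicator {0<..} x *\<^sub>R fm m x) \<in> borel_measurable borel"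
    by (rule borel_measurable_continuous_on_indicator) (auto intro: continuous_at_imp_continuous_on fm_cont)
  thus ?thesis unfolding fp_def[abs_def] by simp
qed

lemma einterval_0_inf: "einterval 0 \<infinity> = {0::real<..}"
  unfolding zero_ereal_def by (rule einterval_eq_Ici)

lemma LBINT_0_inf: "(LBINT x=0..\<infinity>. g x) = (LINT x|lborel. indicator {0<..} x *\<^sub>R g x)"
  unfolding interval_lebesgue_integral_def set_lebesgue_integral_def einterval_0_inf by simp

lemma Fm_lim_top: "(Fm m \<longlongrightarrow> 1) at_top"
proof -
  have "((\<lambda>x. 1 - (\<Sum>k=1..m. cc m k * exp (- (real k ^ 2 * x)))) \<longlongrightarrow> 1 - (\<Sum>k=1..m. cc m k * 0)) at_top"
    by (intro tendsto_diff tendsto_sum tendsto_mult tendsto_const exp_neg_lim) auto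
  thus ?thesis by (simp add: Fm_def[abs_def])
qed

lemma fp_int: "m \<ge> 1 \<Longrightarrow> integrable lborel (fp m) \<and> integral\<^sup>L lborel (fp m) = 1"
proof -
  assume m: "m \<ge> 1"
  have D: "\<And>x. 0 < ereal x \<Longrightarrow> ereal x < \<infinity> \<Longrightarrow> DERIV (Fm m) x :> fm m x" using Fm_deriv by auto
  have C: "\<And>x. 0 < ereal x \<Longrightarrow> ereal x < \<infinity> \<Longrightarrow> isCont (fm m) x" using fm_cont by auto
  have N: "AE x in lborel. 0 < ereal x \<longrightarrow> ereal x < \<infinity> \<longrightarrow> 0 \<le> fm m x" using fm_nonneg by auto
  have "isCont (Fm m) 0" using Fm_deriv by (rule DERIV_isCont)
  hence "(Fm m \<longlongrightarrow> Fm m 0) (at_right 0)" unfolding isCont_def by (rule filterlim_mono) (auto simp: at_le)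
  hence A: "((Fm m \<circ> real_of_ereal) \<longlongrightarrow> 0) (at_right 0)"
    unfolding zero_ereal_def ereal_tendsto_simps using Fm_zero[OF m] by simp
  have B: "((Fm m \<circ> real_of_ereal) \<longlongrightarrow> 1) (at_left \<infinity>)"
    unfolding ereal_tendsto_simps by (rule Fm_lim_top)
  note R = interval_integral_FTC_nonneg[OF _ D C N A B]
  show ?thesis
    using R unfolding set_integrable_def einterval_0_inf LBINT_0_inf fp_def[abs_def] by auto
qed

definition Pm :: "nat \<Rightarrow> real \<Rightarrow> real" where
  "Pm m s = (\<Sum>k=1..m. cc m k * real k ^ 2 / (real k ^ 2 + s))"

lemma Pm_step:
  assumes m: "m \<ge> 2" and s: "s \<ge> 0"
  shows "Pm m s = real m ^ 2 / (real m ^ 2 + s) * Pm (m-1) s"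
proof -
  have m1: "m \<ge> 1" using m by simp
  have Mpos: "real m ^ 2 + s > 0" using m s by (simp add: add_pos_nonneg)
  have per: "real m ^ 2 / (real m ^ 2 + s) * (cc (m-1) k * real k ^ 2 / (real k ^ 2 + s))
      = cc m k * real k ^ 2 / (real k ^ 2 + s) - cc m k * real k ^ 2 / (real m ^ 2 + s)" if k: "k \<in> {1..m-1}" for k
  proof -
    have r: "real m ^ 2 * cc (m-1) k = cc m k * (real m ^ 2 - real k ^ 2)"
      using k m by (intro cc_rec[symmetric]) auto
    have Kpos: "real k ^ 2 + s > 0" using k s by (simp add: add_pos_nonneg)
    have "real m ^ 2 / (real m ^ 2 + s) * (cc (m-1) k * real k ^ 2 / (real k ^ 2 + s))
        = (real m ^ 2 * cc (m-1) k) * real k ^ 2 / ((real m ^ 2 + s) * (real k ^ 2 + s))"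
      by (simp add: field_simps)
    also have "\<dots> = cc m k * (real m ^ 2 - real k ^ 2) * real k ^ 2 / ((real m ^ 2 + s) * (real k ^ 2 + s))"
      by (simp only: r)
    also have "\<dots> = cc m k * real k ^ 2 / (real k ^ 2 + s) - cc m k * real k ^ 2 / (real m ^ 2 + s)"
      using Mpos Kpos by (simp add: field_simps)
    finally show ?thesis .
  qed
  have "real m ^ 2 / (real m ^ 2 + s) * Pm (m-1) s
     = (\<Sum>k=1..m-1. real m ^ 2 / (real m ^ 2 + s) * (cc (m-1) k * real k ^ 2 / (real k ^ 2 + s)))"
    unfolding Pm_def by (simp add: sum_distrib_left)
  also have "\<dots> = (\<Sum>k=1..m-1. cc m k * real k ^ 2 / (real k ^ 2 + s)) - (\<Sum>k=1..m-1. cc m k * real k ^ 2 / (real m ^ 2 + s))"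
  proof -
    have "(\<Sum>k=1..m-1. real m ^ 2 / (real m ^ 2 + s) * (cc (m-1) k * real k ^ 2 / (real k ^ 2 + s)))
       = (\<Sum>k=1..m-1. cc m k * real k ^ 2 / (real k ^ 2 + s) - cc m k * real k ^ 2 / (real m ^ 2 + s))"
      by (rule sum.cong[OF refl per])
    thus ?thesis by (simp only: sum_subtractf)
  qed
  also have "(\<Sum>k=1..m-1. cc m k * real k ^ 2 / (real m ^ 2 + s)) = - (cc m m * real m ^ 2 / (real m ^ 2 + s))"
  proof -
    have "(\<Sum>k=1..m. cc m k * real k ^ 2 / (real m ^ 2 + s)) = (\<Sum>k=1..m. cc m k * real k ^ 2) / (real m ^ 2 + s)"
      by (simp add: sum_divide_distrib)
    also have "\<dots> = 0" using cc_sum_sq[OF m] by simp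
    finally show ?thesis using sum_split_last[OF m1, of "\<lambda>k. cc m k * real k ^ 2 / (real m ^ 2 + s)"] by simp
  qed
  also have "(\<Sum>k=1..m-1. cc m k * real k ^ 2 / (real k ^ 2 + s)) - - (cc m m * real m ^ 2 / (real m ^ 2 + s)) = Pm m s"
    unfolding Pm_def using sum_split_last[OF m1, of "\<lambda>k. cc m k * real k ^ 2 / (real k ^ 2 + s)"] by simp
  finally show ?thesis by simp
qed

lemma Pm_prod: "m \<ge> 1 \<Longrightarrow> s \<ge> 0 \<Longrightarrow> Pm m s = (\<Prod>i<m. inverse (1 + s / (real (Suc i))^2))"
proof (induction m rule: nat_induct_at_least)
  case base
  have "1 + s > 0" using base by simp
  thus ?case by (simp add: Pm_def cc_1_1 field_simps)
next
  case (Suc n)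
  have "Pm (Suc n) s = real (Suc n) ^ 2 / (real (Suc n) ^ 2 + s) * Pm n s"
    using Pm_step[of "Suc n" s] Suc by simp
  also have "real (Suc n) ^ 2 / (real (Suc n) ^ 2 + s) = inverse (1 + s / (real (Suc n))^2)"
    by (simp add: field_simps)
  finally show ?case using Suc by (simp add: mult.commute)
qed

lemma Pm_nonneg_sum: "m \<ge> 1 \<Longrightarrow> s \<ge> 0 \<Longrightarrow> Pm m s = (\<Prod>j=1..m. real j ^ 2 / (real j ^ 2 + s))"
proof -
  assume "m \<ge> 1" "s \<ge> 0"
  hence "Pm m s = (\<Prod>i<m. inverse (1 + s / (real (Suc i))^2))" by (rule Pm_prod)
  also have "\<dots> = (\<Prod>i<m. real (Suc i) ^ 2 / (real (Suc i) ^ 2 + s))"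
    by (intro prod.cong refl) (simp add: field_simps)
  also have "\<dots> = (\<Prod>j=1..m. real j ^ 2 / (real j ^ 2 + s))"
    by (simp add: prod.atLeast1_atMost_eq)
  finally show ?thesis .
qed

lemma laplace_fp:
  assumes m: "m \<ge> 1" and s: "s \<ge> 0"
  shows "integrable lborel (\<lambda>x. exp (- s * x) * fp m x)"
        "(LINT x|lborel. exp (- s * x) * fp m x) = Pm m s"
proof -
  define Cc where "Cc k = cc m k * real k ^ 2 / (real k ^ 2 + s)" for k
  define ak where "ak k = real k ^ 2 + s" for k
  define \<Psi> where "\<Psi> x = - (\<Sum>k=1..m. Cc k * exp (- (ak k * x)))" for x
  have D: "DERIV \<Psi> x :> exp (- s * x) * fm m x" for x
  proof -
    have dk: "((\<lambda>z. Cc k * exp (- (ak k * z))) has_real_derivative Cc k * (exp (- (ak k * x)) * (- ak k))) (at x)" for k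
      by (intro DERIV_cmult) (auto intro!: derivative_eq_intros)
    have DD: "DERIV \<Psi> x :> - (\<Sum>k=1..m. Cc k * (exp (- (ak k * x)) * (- ak k)))"
      unfolding \<Psi>_def by (intro DERIV_minus DERIV_sum dk)
    have EQ: "- (\<Sum>k=1..m. Cc k * (exp (- (ak k * x)) * (- ak k))) = exp (- s * x) * fm m x"
    proof -
      have "Cc k * (exp (- (ak k * x)) * (- ak k))
          = - (exp (- s * x) * (cc m k * real k ^ 2 * exp (- (real k ^ 2 * x))))" if "k \<in> {1..m}" for k
      proof -
        have Kpos: "real k ^ 2 + s > 0" using that s by (simp add: add_pos_nonneg)
        have "exp (- ((real k ^ 2 + s) * x)) = exp (- s * x) * exp (- (real k ^ 2 * x))"
          by (simp add: exp_add[symmetric] algebra_simps)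
        thus ?thesis using Kpos by (simp add: Cc_def ak_def field_simps)
      qed
      hence "(\<Sum>k=1..m. Cc k * (exp (- (ak k * x)) * (- ak k)))
          = (\<Sum>k=1..m. - (exp (- s * x) * (cc m k * real k ^ 2 * exp (- (real k ^ 2 * x)))))"
        by (rule sum.cong[OF refl])
      thus ?thesis by (simp add: fm_def sum_distrib_left sum_negf mult.assoc)
    qed
    show ?thesis using DD unfolding EQ .
  qed
  have C: "isCont (\<lambda>x. exp (- s * x) * fm m x) x" for x
    by (intro continuous_intros fm_cont)
  have N: "AE x in lborel. 0 < ereal x \<longrightarrow> ereal x < \<infinity> \<longrightarrow> 0 \<le> exp (- s * x) * fm m x"
    using fm_nonneg by auto
  have "isCont \<Psi> 0" using D by (rule DERIV_isCont)
  hence "(\<Psi> \<longlongrightarrow> \<Psi> 0) (at_right 0)" unfolding isCont_def by (rule filterlim_mono) (auto simp: at_le)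
  moreover have "\<Psi> 0 = - Pm m s" by (simp add: \<Psi>_def Pm_def Cc_def)
  ultimately have A: "((\<Psi> \<circ> real_of_ereal) \<longlongrightarrow> - Pm m s) (at_right 0)"
    unfolding zero_ereal_def ereal_tendsto_simps by simp
  have "(\<Psi> \<longlongrightarrow> - (\<Sum>k=1..m. Cc k * 0)) at_top"
    unfolding \<Psi>_def
    by (intro tendsto_minus tendsto_sum tendsto_mult tendsto_const exp_neg_lim)
       (use s in \<open>auto simp: add_pos_nonneg ak_def\<close>)
  hence B: "((\<Psi> \<circ> real_of_ereal) \<longlongrightarrow> 0) (at_left \<infinity>)"
    unfolding ereal_tendsto_simps by simp
  note R = interval_integral_FTC_nonneg[OF _ D C N A B]
  have e: "(\<lambda>x. exp (- s * x) * fp m x) = (\<lambda>x. indicator {0<..} x *\<^sub>R (exp (- s * x) * fm m x))"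
    by (auto simp: fp_def indicator_def)
  show "integrable lborel (\<lambda>x. exp (- s * x) * fp m x)"
    using R(1) unfolding e set_integrable_def einterval_0_inf by auto
  show "(LINT x|lborel. exp (- s * x) * fp m x) = Pm m s"
    using R(2) unfolding e LBINT_0_inf by auto
qed

lemma fp_lim: "(\<lambda>m. fp m x) \<longlonglongrightarrow> tau_density x"
proof (cases "x > 0")
  case True
  then show ?thesis using tannery_f[OF True] by (simp add: fp_def tau_density_eq)
next
  case False
  then show ?thesis by (simp add: fp_def tau_density_eq)
qed

lemma scheffe: "(\<lambda>m. LINT x|lborel. \<bar>tau_density x - fp m x\<bar>) \<longlonglongrightarrow> 0"
proof -
  define h where "h m x = max (tau_density x - fp m x) 0" for m x
  have hm: "h m \<in> borel_measurable lborel" for m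
    unfolding h_def[abs_def] using td_meas fp_meas by measurable
  have hb: "AE x in lborel. norm (h m x) \<le> tau_density x" for m
    using fp_nonneg[of m] td_nonneg by (auto simp: h_def)
  have hl: "AE x in lborel. (\<lambda>m. h m x) \<longlonglongrightarrow> 0"
  proof (intro AE_I2)
    fix x
    have "(\<lambda>m. max (tau_density x - fp m x) 0) \<longlonglongrightarrow> max (tau_density x - tau_density x) 0"
      by (intro tendsto_max tendsto_diff tendsto_const fp_lim)
    thus "(\<lambda>m. h m x) \<longlonglongrightarrow> 0" by (simp add: h_def)
  qed
  have z: "(\<lambda>_. 0::real) \<in> borel_measurable lborel" by simp
  note DC = integral_dominated_convergence[OF z hm td_integrable hl hb]
       integrable_dominated_convergence2[OF z hm td_integrable hl hb]
  have eq: "(LINT x|lborel. \<bar>tau_density x - fp m x\<bar>) = 2 * integral\<^sup>L lborel (h m)" if m: "m \<ge> 1" for m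
  proof -
    have i1: "integrable lborel (fp m)" using fp_int[OF m] by simp
    have "(LINT x|lborel. \<bar>tau_density x - fp m x\<bar>) = (LINT x|lborel. 2 * h m x - (tau_density x - fp m x))"
      by (rule Bochner_Integration.integral_cong[OF refl]) (simp add: h_def max_def abs_if)
    also have "\<dots> = 2 * integral\<^sup>L lborel (h m) - (integral\<^sup>L lborel tau_density - integral\<^sup>L lborel (fp m))"
      using DC(2)[of m] td_integrable i1 by simp
    also have "\<dots> = 2 * integral\<^sup>L lborel (h m)" using td_integral fp_int[OF m] by simp
    finally show ?thesis .
  qed
  have "(\<lambda>m. 2 * integral\<^sup>L lborel (h m)) \<longlonglongrightarrow> 2 * 0"
    using DC(1) by (intro tendsto_mult tendsto_const) simp
  hence "(\<lambda>m. 2 * integral\<^sup>L lborel (h m)) \<longlonglongrightarrow> 0" by simp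
  thus ?thesis
    by (rule Lim_transform_eventually) (auto simp: eventually_sequentially eq intro!: exI[of _ 1])
qed

lemma laplace_limit:
  assumes s: "s \<ge> 0"
  shows "integrable lborel (\<lambda>x. tau_density x * exp (- s * x))"
        "(\<lambda>m. Pm m s) \<longlonglongrightarrow> (LINT x|lborel. tau_density x * exp (- s * x))"
proof -
  have le1: "\<bar>tau_density x * exp (- s * x)\<bar> \<le> \<bar>tau_density x\<bar> \<and> (\<forall>g. tau_density x = 0 \<or> exp (- s * x) \<le> 1)" for x
  proof (cases "x > 0")
    case True
    hence "exp (- s * x) \<le> 1" using s by (simp add: mult_nonneg_nonneg)
    thus ?thesis by (simp add: abs_mult mult_left_le td_nonneg)
  next
    case False
    thus ?thesis by (simp add: tau_density_eq)
  qed
  show I: "integrable lborel (\<lambda>x. tau_density x * exp (- s * x))"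
    by (rule Bochner_Integration.integrable_bound[OF td_integrable]) (use td_meas le1 in auto)
  define L where "L = (LINT x|lborel. tau_density x * exp (- s * x))"
  have bnd: "norm (Pm m s - L) \<le> (LINT x|lborel. \<bar>tau_density x - fp m x\<bar>)" if m: "m \<ge> 1" for m
  proof -
    note lf = laplace_fp[OF m s]
    have i1: "integrable lborel (fp m)" using fp_int[OF m] by simp
    have fe: "(\<lambda>x. (tau_density x - fp m x) * exp (- s * x)) = (\<lambda>x. tau_density x * exp (- s * x) - exp (- s * x) * fp m x)"
      by (auto simp: algebra_simps)
    have "(LINT x|lborel. (tau_density x - fp m x) * exp (- s * x)) = L - Pm m s"
      unfolding fe L_def lf(2)[symmetric] by (rule Bochner_Integration.integral_diff[OF I lf(1)])
    hence "Pm m s - L = - (LINT x|lborel. (tau_density x - fp m x) * exp (- s * x))" by simp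
    hence "norm (Pm m s - L) = \<bar>LINT x|lborel. (tau_density x - fp m x) * exp (- s * x)\<bar>" by simp
    also have "\<dots> \<le> (LINT x|lborel. \<bar>tau_density x - fp m x\<bar>)"
    proof (rule integral_abs_bound_integral)
      show "integrable lborel (\<lambda>x. (tau_density x - fp m x) * exp (- s * x))"
        unfolding fe using I lf(1) by (rule Bochner_Integration.integrable_diff)
      show "integrable lborel (\<lambda>x. \<bar>tau_density x - fp m x\<bar>)"
        using td_integrable i1 by auto
      fix x
      show "\<bar>(tau_density x - fp m x) * exp (- s * x)\<bar> \<le> \<bar>tau_density x - fp m x\<bar>"
      proof (cases "x > 0")
        case True
        hence "exp (- s * x) \<le> 1" using s by (simp add: mult_nonneg_nonneg)
        thus ?thesis by (simp add: abs_mult mult_left_le)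
      next
        case False
        thus ?thesis by (simp add: tau_density_eq fp_def)
      qed
    qed
    finally show ?thesis .
  qed
  have "(\<lambda>m. Pm m s - L) \<longlonglongrightarrow> 0"
  proof (rule Lim_null_comparison[OF _ scheffe])
    show "\<forall>\<^sub>F m in sequentially. norm (Pm m s - L) \<le> (LINT x|lborel. \<bar>tau_density x - fp m x\<bar>)"
      unfolding eventually_sequentially using bnd by blast
  qed
  hence "(\<lambda>m. Pm m s - L + L) \<longlonglongrightarrow> 0 + L" by (intro tendsto_add tendsto_const)
  thus "(\<lambda>m. Pm m s) \<longlonglongrightarrow> (LINT x|lborel. tau_density x * exp (- s * x))" by (simp add: L_def)
qed

lemma prodinf_from_lim:
  fixes f :: "nat \<Rightarrow> real"
  assumes nz: "\<And>i. f i \<noteq> 0" and lim: "(\<lambda>n. \<Prod>i<n. f i) \<longlonglongrightarrow> L" and L: "L \<noteq> 0"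
  shows "prodinf f = L"
proof -
  have l2: "(\<lambda>n. \<Prod>i\<le>n. f i) \<longlonglongrightarrow> L"
    using LIMSEQ_Suc[OF lim] by (simp add: lessThan_Suc_atMost)
  hence "convergent_prod f" using convergent_prod_iff_nz_lim[of f] nz L by blast
  hence "(\<lambda>n. \<Prod>i\<le>n. f i) \<longlonglongrightarrow> prodinf f" by (rule convergent_prod_LIMSEQ)
  thus ?thesis using l2 LIMSEQ_unique by blast
qed

lemma sinh_prod:
  assumes s: "s > 0"
  shows "(\<lambda>n. \<Prod>k=1..n. 1 + s / real k ^ 2) \<longlonglongrightarrow> sinh (pi * sqrt s) / (pi * sqrt s)"
proof -
  define z where "z = \<i> * complex_of_real (sqrt s)"
  have sq: "(complex_of_real (sqrt s))^2 = complex_of_real s" using s by (simp flip: of_real_power)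
  have z2: "z^2 = - complex_of_real s" using sq by (simp add: z_def power_mult_distrib)
  have P: "(\<lambda>n. of_real pi * z * (\<Prod>k=1..n. 1 - z^2 / of_nat k^2)) \<longlonglongrightarrow> sin (of_real pi * z)"
    by (rule sin_product_formula_complex)
  have e1: "(\<Prod>k=1..n. 1 - z^2 / of_nat k^2) = complex_of_real (\<Prod>k=1..n. 1 + s / real k ^ 2)" for n
    unfolding z2 by (simp add: of_real_prod)
  have e2: "sin (\<i> * complex_of_real (pi * sqrt s)) = \<i> * complex_of_real (sinh (pi * sqrt s))"
  proof -
    have "sin (\<i> * complex_of_real (pi * sqrt s)) = \<i> * ((exp (complex_of_real (pi * sqrt s)) - inverse (exp (complex_of_real (pi * sqrt s)))) / 2)"
      by (rule sin_i_times)
    also have "(exp (complex_of_real (pi * sqrt s)) - inverse (exp (complex_of_real (pi * sqrt s)))) / 2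
        = complex_of_real ((exp (pi * sqrt s) - inverse (exp (pi * sqrt s))) / 2)"
      by (simp add: exp_of_real[symmetric])
    also have "(exp (pi * sqrt s) - inverse (exp (pi * sqrt s))) / 2 = sinh (pi * sqrt s)"
      by (simp add: sinh_def exp_minus)
    finally show ?thesis .
  qed
  have c: "of_real pi * z = \<i> * complex_of_real (pi * sqrt s)" by (simp add: z_def)
  have nz: "pi * sqrt s \<noteq> 0" using s by simp
  from P have "(\<lambda>n. (\<i> * complex_of_real (pi * sqrt s)) * complex_of_real (\<Prod>k=1..n. 1 + s / real k ^ 2)) \<longlonglongrightarrow> \<i> * complex_of_real (sinh (pi * sqrt s))"
    unfolding e1 c e2 .
  hence "(\<lambda>n. (\<i> * complex_of_real (pi * sqrt s)) * complex_of_real (\<Prod>k=1..n. 1 + s / real k ^ 2) / (\<i> * complex_of_real (pi * sqrt s)))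
          \<longlonglongrightarrow> \<i> * complex_of_real (sinh (pi * sqrt s)) / (\<i> * complex_of_real (pi * sqrt s))"
    by (intro tendsto_divide tendsto_const) (use nz in auto)
  hence "(\<lambda>n. complex_of_real (\<Prod>k=1..n. 1 + s / real k ^ 2)) \<longlonglongrightarrow> complex_of_real (sinh (pi * sqrt s) / (pi * sqrt s))"
    using nz by (simp del: of_real_prod)
  thus ?thesis by (subst (asm) tendsto_of_real_iff)
qed

lemma prod_limit:
  assumes s: "s \<ge> 0"
  shows "(\<lambda>n. \<Prod>i<n. inverse (1 + s / (real (Suc i))^2)) \<longlonglongrightarrow> (\<Prod>m. inverse (1 + s / (real (Suc m))^2))"
    and "s > 0 \<Longrightarrow> (\<Prod>m. inverse (1 + s / (real (Suc m))^2)) = pi * sqrt s / sinh (pi * sqrt s)"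
proof -
  have nz: "\<And>i. inverse (1 + s / (real (Suc i))^2) \<noteq> 0"
    using s by (simp add: add_pos_nonneg add_eq_0_iff) (smt (verit) divide_nonneg_nonneg of_nat_0_le_iff zero_le_power2)
  have ex: "\<exists>L. (\<lambda>n. \<Prod>i<n. inverse (1 + s / (real (Suc i))^2)) \<longlonglongrightarrow> L \<and> L \<noteq> 0 \<and> (s > 0 \<longrightarrow> L = pi * sqrt s / sinh (pi * sqrt s))"
  proof (cases "s = 0")
    case True
    then show ?thesis by (intro exI[of _ 1]) simp
  next
    case False
    hence sp: "s > 0" using s by simp
    have pos: "sinh (pi * sqrt s) > 0" using sp by simp
    have "(\<lambda>n. inverse (\<Prod>k=1..n. 1 + s / real k ^ 2)) \<longlonglongrightarrow> inverse (sinh (pi * sqrt s) / (pi * sqrt s))"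
      by (intro tendsto_inverse sinh_prod sp) (use pos sp in auto)
    moreover have "inverse (\<Prod>k=1..n. 1 + s / real k ^ 2) = (\<Prod>i<n. inverse (1 + s / (real (Suc i))^2))" for n
      by (simp add: prod_inversef[symmetric] prod.atLeast1_atMost_eq comp_def)
    ultimately have "(\<lambda>n. \<Prod>i<n. inverse (1 + s / (real (Suc i))^2)) \<longlonglongrightarrow> pi * sqrt s / sinh (pi * sqrt s)"
      by simp
    thus ?thesis using pos sp by (intro exI[of _ "pi * sqrt s / sinh (pi * sqrt s)"]) auto
  qed
  then obtain L where L: "(\<lambda>n. \<Prod>i<n. inverse (1 + s / (real (Suc i))^2)) \<longlonglongrightarrow> L" "L \<noteq> 0"
    "s > 0 \<Longrightarrow> L = pi * sqrt s / sinh (pi * sqrt s)" by blast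
  have pe: "(\<Prod>m. inverse (1 + s / (real (Suc m))^2)) = L" by (rule prodinf_from_lim[OF nz L(1,2)])
  show "(\<lambda>n. \<Prod>i<n. inverse (1 + s / (real (Suc i))^2)) \<longlonglongrightarrow> (\<Prod>m. inverse (1 + s / (real (Suc m))^2))"
    using L(1) pe by simp
  show "s > 0 \<Longrightarrow> (\<Prod>m. inverse (1 + s / (real (Suc m))^2)) = pi * sqrt s / sinh (pi * sqrt s)"
    using L(3) pe by simp
qed

lemma laplace_tau:
  assumes s: "s \<ge> 0"
  shows "(\<integral>x. exp (- s * x) \<partial>tau_law) = (\<Prod>m. inverse (1 + s / (real (Suc m))^2))"
proof -
  have "(\<integral>x. exp (- s * x) \<partial>tau_law) = (LINT x|lborel. tau_density x *\<^sub>R exp (- s * x))"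
    unfolding tau_law_def by (rule integral_density) (use td_meas in \<open>auto simp: td_nonneg\<close>)
  hence e: "(\<integral>x. exp (- s * x) \<partial>tau_law) = (LINT x|lborel. tau_density x * exp (- s * x))" by simp
  have "(\<lambda>m. Pm m s) \<longlonglongrightarrow> (\<Prod>m. inverse (1 + s / (real (Suc m))^2))"
    by (rule Lim_transform_eventually[OF prod_limit(1)[OF s]])
       (auto simp: eventually_sequentially Pm_prod[OF _ s] intro!: exI[of _ 1])
  with laplace_limit(2)[OF s] show ?thesis unfolding e using LIMSEQ_unique by blast
qed

definition own :: "nat \<Rightarrow> config \<Rightarrow> nat \<Rightarrow> nat" where
  "own N c p = (SOME v. v \<le> N \<and> p \<in> set (c v))"

lemma valid_in: "valid_config N c \<Longrightarrow> p \<in> set (c v) \<Longrightarrow> v \<le> N \<and> p \<le> N"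
proof -
  assume V: "valid_config N c" and p: "p \<in> set (c v)"
  have "v \<le> N" using V p unfolding valid_config_def by (metis empty_iff empty_set not_le)
  moreover have "p \<in> (\<Union>v\<in>{0..N}. set (c v))" using p \<open>v \<le> N\<close> by auto
  hence "p \<le> N" using V unfolding valid_config_def by auto
  ultimately show ?thesis by simp
qed

lemma valid_owner: "valid_config N c \<Longrightarrow> p \<le> N \<Longrightarrow> own N c p \<le> N \<and> p \<in> set (c (own N c p))"
proof -
  assume V: "valid_config N c" and p: "p \<le> N"
  have "p \<in> (\<Union>v\<in>{0..N}. set (c v))" using V p unfolding valid_config_def by auto
  then obtain v where "v \<le> N \<and> p \<in> set (c v)" by auto
  thus ?thesis unfolding own_def by (rule someI)
qed

lemma valid_disj: "valid_config N c \<Longrightarrow> p \<in> set (c v) \<Longrightarrow> p \<in> set (c u) \<Longrightarrow> u = v"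
  unfolding valid_config_def by blast

lemma own_unique: "valid_config N c \<Longrightarrow> p \<in> set (c v) \<Longrightarrow> own N c p = v"
  using valid_owner valid_in valid_disj by metis

lemma remove1_nonempty: "distinct xs \<Longrightarrow> p \<in> set xs \<Longrightarrow> p \<noteq> last xs \<Longrightarrow> remove1 p xs \<noteq> []"
proof
  assume d: "distinct xs" and p: "p \<in> set xs" and l: "p \<noteq> last xs" and r: "remove1 p xs = []"
  have "length (remove1 p xs) = length xs - 1" using p by (simp add: length_remove1)
  hence "length xs = 1" using r p by (cases xs) auto
  then obtain a where "xs = [a]" by (cases xs) auto
  thus False using p l by simp
qed

lemma step_valid:
  assumes V: "valid_config N c" and p: "p \<in> set (c v)" and w: "w \<le> N" "w \<noteq> v"
  shows "valid_config N (c(v := remove1 p (c v), w := p # c w))"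
proof -
  have vN: "v \<le> N" using valid_in[OF V p] by simp
  have d: "\<And>u. distinct (c u)" using V unfolding valid_config_def by blast
  have dj: "\<And>u u'. u \<noteq> u' \<Longrightarrow> set (c u) \<inter> set (c u') = {}" using V unfolding valid_config_def by blast
  have pw: "p \<notin> set (c w)" using dj[OF w(2)] p by blast
  have sv: "set (remove1 p (c v)) = set (c v) - {p}" using d[of v] by (simp add: set_remove1_eq)
  let ?c' = "c(v := remove1 p (c v), w := p # c w)"
  have A: "\<forall>u. N < u \<longrightarrow> ?c' u = []" using V vN w unfolding valid_config_def by auto
  have B: "\<forall>u. distinct (?c' u)" using d pw w(2) by (auto simp: distinct_remove1)
  have C: "\<forall>u u'. u \<noteq> u' \<longrightarrow> set (?c' u) \<inter> set (?c' u') = {}"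
  proof (intro allI impI)
    fix u u' :: nat assume uu: "u \<noteq> u'"
    have s: "set (?c' x) = (if x = w then insert p (set (c w)) else if x = v then set (c v) - {p} else set (c x))" for x
      using w(2) sv by auto
    show "set (?c' u) \<inter> set (?c' u') = {}"
      unfolding s using uu dj p w(2) by (auto split: if_splits)
  qed
  have D: "(\<Union>u\<in>{0..N}. set (?c' u)) = (\<Union>u\<in>{0..N}. set (c u))"
  proof -
    have s: "set (?c' x) = (if x = w then insert p (set (c w)) else if x = v then set (c v) - {p} else set (c x))" for x
      using w(2) sv by auto
    show ?thesis unfolding s using p w vN by (auto split: if_splits)
  qed
  show ?thesis using A B C D V unfolding valid_config_def by simp
qed

lemma step_empty:
  assumes V: "valid_config N c" and p: "p \<in> set (c v)" and w: "w \<le> N" "w \<noteq> v" and nb: "p \<noteq> last (c v)"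
  shows "empty_vertices N (c(v := remove1 p (c v), w := p # c w)) = empty_vertices N c - {w}"
proof -
  have d: "distinct (c v)" using V unfolding valid_config_def by blast
  have "remove1 p (c v) \<noteq> []" by (rule remove1_nonempty[OF d p nb])
  moreover have "c v \<noteq> []" using p by auto
  ultimately show ?thesis using w by (auto simp: empty_vertices_def)
qed

lemma sum_len: "valid_config N c \<Longrightarrow> (\<Sum>v\<in>{0..N}. length (c v)) = N + 1"
proof -
  assume V: "valid_config N c"
  have "card (\<Union>v\<in>{0..N}. set (c v)) = (\<Sum>v\<in>{0..N}. card (set (c v)))"
    by (rule card_UN_disjoint) (use V in \<open>auto simp: valid_config_def\<close>)
  also have "\<dots> = (\<Sum>v\<in>{0..N}. length (c v))"
    by (rule sum.cong) (use V in \<open>auto simp: valid_config_def distinct_card\<close>)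
  finally show ?thesis using V by (simp add: valid_config_def)
qed

lemma halted_iff: "valid_config N c \<Longrightarrow> halted N c \<longleftrightarrow> empty_vertices N c = {}"
proof
  assume "halted N c"
  thus "empty_vertices N c = {}" unfolding halted_def empty_vertices_def
    by (metis (mono_tags, lifting) Collect_empty_eq atLeastAtMost_iff list.size(3) zero_neq_one)
next
  assume V: "valid_config N c" and E: "empty_vertices N c = {}"
  have ne: "\<And>v. v \<le> N \<Longrightarrow> length (c v) \<ge> 1" using E by (auto simp: empty_vertices_def Suc_le_eq)
  have "(\<Sum>v\<in>{0..N}. length (c v)) = (\<Sum>v\<in>{0..N}. 1 + (length (c v) - 1))"
  proof (rule sum.cong[OF refl])
    fix v assume "v \<in> {0..N}"
    hence "length (c v) \<ge> 1" using ne by simp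
    thus "length (c v) = 1 + (length (c v) - 1)" by simp
  qed
  also have "\<dots> = (\<Sum>v\<in>{0..N}. 1) + (\<Sum>v\<in>{0..N}. length (c v) - 1)" by (rule sum.distrib)
  also have "\<dots> = (N + 1) + (\<Sum>v\<in>{0..N}. length (c v) - 1)" by simp
  finally have "(\<Sum>v\<in>{0..N}. length (c v) - 1) = 0" using sum_len[OF V] by simp
  hence "\<forall>v\<in>{0..N}. length (c v) - 1 = 0" by simp
  show "halted N c" unfolding halted_def
  proof
    fix v assume v: "v \<in> {0..N}"
    have "length (c v) - 1 = 0" "length (c v) \<ge> 1" using \<open>\<forall>v\<in>{0..N}. length (c v) - 1 = 0\<close> v ne by auto
    thus "length (c v) = 1" by linarith
  qed
qed

lemma card_bottom:
  assumes V: "valid_config N c"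
  shows "card {p\<in>{0..N}. p = last (c (own N c p))} = N + 1 - card (empty_vertices N c)"
    and "card (empty_vertices N c) \<le> N + 1"
proof -
  define NE where "NE = {v\<in>{0..N}. c v \<noteq> []}"
  have part: "NE \<union> empty_vertices N c = {0..N}" "NE \<inter> empty_vertices N c = {}"
    by (auto simp: NE_def empty_vertices_def)
  hence cNE: "card NE + card (empty_vertices N c) = N + 1"
    by (metis card_Un_disjoint card_atLeastAtMost finite_Un finite_atLeastAtMost minus_nat.diff_0 Suc_eq_plus1)
  show "card (empty_vertices N c) \<le> N + 1" using cNE by simp
  have eq: "{p\<in>{0..N}. p = last (c (own N c p))} = (\<lambda>v. last (c v)) ` NE"
  proof
    show "{p\<in>{0..N}. p = last (c (own N c p))} \<subseteq> (\<lambda>v. last (c v)) ` NE"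
    proof
      fix p assume "p \<in> {p\<in>{0..N}. p = last (c (own N c p))}"
      hence pN: "p \<le> N" and pl: "p = last (c (own N c p))" by auto
      have o: "own N c p \<le> N" "p \<in> set (c (own N c p))" using valid_owner[OF V pN] by auto
      hence "own N c p \<in> NE" by (auto simp: NE_def)
      thus "p \<in> (\<lambda>v. last (c v)) ` NE" using pl by blast
    qed
  next
    show "(\<lambda>v. last (c v)) ` NE \<subseteq> {p\<in>{0..N}. p = last (c (own N c p))}"
    proof
      fix p assume "p \<in> (\<lambda>v. last (c v)) ` NE"
      then obtain v where v: "v \<in> NE" "p = last (c v)" by blast
      have pin: "p \<in> set (c v)" using v by (auto simp: NE_def)
      have "p \<le> N" using valid_in[OF V pin] by simp
      moreover have "own N c p = v" by (rule own_unique[OF V pin])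
      ultimately show "p \<in> {p\<in>{0..N}. p = last (c (own N c p))}" using v by auto
    qed
  qed
  have inj: "inj_on (\<lambda>v. last (c v)) NE"
  proof (rule inj_onI)
    fix u v assume "u \<in> NE" "v \<in> NE" "last (c u) = last (c v)"
    hence "last (c u) \<in> set (c u)" "last (c u) \<in> set (c v)" by (auto simp: NE_def) (metis last_in_set)
    thus "u = v" using valid_disj[OF V] by blast
  qed
  show "card {p\<in>{0..N}. p = last (c (own N c p))} = N + 1 - card (empty_vertices N c)"
    unfolding eq card_image[OF inj] using cNE by simp
qed

definition qq :: "nat \<Rightarrow> nat \<Rightarrow> real" where
  "qq N k = real k ^ 2 / (real N * (real N + 1))"

lemma step_eq:
  "dsf_step N c = pmf_of_set {0..N} \<bind> (\<lambda>p. pmf_of_set ({0..N} - {own N c p}) \<bind>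
     (\<lambda>w. return_pmf (if p = last (c (own N c p)) then c
                       else c(own N c p := remove1 p (c (own N c p)), w := p # c w))))"
  unfolding dsf_step_def Let_def own_def ..

lemma empty_le_N:
  assumes V: "valid_config N c"
  shows "card (empty_vertices N c) \<le> N"
proof -
  have o: "own N c 0 \<le> N" "0 \<in> set (c (own N c 0))" using valid_owner[OF V, of 0] by auto
  have "empty_vertices N c \<subseteq> {0..N} - {own N c 0}" using o by (auto simp: empty_vertices_def)
  hence "card (empty_vertices N c) \<le> card ({0..N} - {own N c 0})" by (intro card_mono) auto
  also have "\<dots> = N" using o by simp
  finally show ?thesis .
qed

lemma step_expect:
  fixes \<phi> :: "nat \<Rightarrow> real"
  assumes V: "valid_config N c" and N: "N \<ge> 1"
  shows "measure_pmf.expectation (dsf_step N c) (\<lambda>y. \<phi> (card (empty_vertices N y)))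
       = qq N (card (empty_vertices N c)) * \<phi> (card (empty_vertices N c) - 1)
         + (1 - qq N (card (empty_vertices N c))) * \<phi> (card (empty_vertices N c))"
proof -
  define m where "m = card (empty_vertices N c)"
  define E where "E = empty_vertices N c"
  define W where "W p = {0..N} - {own N c p}" for p
  define R where "R p w = (if p = last (c (own N c p)) then c
                       else c(own N c p := remove1 p (c (own N c p)), w := p # c w))" for p w
  define bot where "bot p = (p = last (c (own N c p)))" for p
  have mN: "m \<le> N" using empty_le_N[OF V] by (simp add: m_def)
  have own: "\<And>p. p \<le> N \<Longrightarrow> own N c p \<le> N \<and> p \<in> set (c (own N c p))" using valid_owner[OF V] by blast
  have Wne: "W p \<noteq> {}" if "p \<le> N" for p
  proof (cases "own N c p = 0")
    case True then show ?thesis using N by (auto simp: W_def intro!: exI[of _ 1])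
  next
    case False then show ?thesis by (auto simp: W_def intro!: exI[of _ 0])
  qed
  have cW: "card (W p) = N" if "p \<le> N" for p using own[OF that] by (simp add: W_def)
  have fW: "finite (W p)" for p by (simp add: W_def)
  have inner: "measure_pmf.expectation (pmf_of_set (W p) \<bind> (\<lambda>w. return_pmf (R p w))) (\<lambda>y. \<phi> (card (empty_vertices N y)))
      = (\<Sum>w\<in>W p. \<phi> (card (empty_vertices N (R p w)))) / real N" if p: "p \<le> N" for p
  proof -
    have "measure_pmf.expectation (pmf_of_set (W p) \<bind> (\<lambda>w. return_pmf (R p w))) (\<lambda>y. \<phi> (card (empty_vertices N y)))
       = (\<Sum>w\<in>W p. measure_pmf.expectation (return_pmf (R p w)) (\<lambda>y. \<phi> (card (empty_vertices N y))) /\<^sub>R real (card (W p)))"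
      by (rule pmf_expectation_bind_pmf_of_set) (use Wne[OF p] fW in auto)
    also have "\<dots> = (\<Sum>w\<in>W p. \<phi> (card (empty_vertices N (R p w))) / real N)"
      unfolding cW[OF p] by (simp add: divide_inverse_commute)
    also have "\<dots> = (\<Sum>w\<in>W p. \<phi> (card (empty_vertices N (R p w)))) / real N"
      by (simp add: sum_divide_distrib)
    finally show ?thesis .
  qed
  have "measure_pmf.expectation (dsf_step N c) (\<lambda>y. \<phi> (card (empty_vertices N y)))
      = (\<Sum>p\<in>{0..N}. measure_pmf.expectation (pmf_of_set (W p) \<bind> (\<lambda>w. return_pmf (R p w))) (\<lambda>y. \<phi> (card (empty_vertices N y))) / real (N+1))"
    unfolding step_eq W_def[symmetric] R_def[symmetric]
    by (subst pmf_expectation_bind_pmf_of_set) (auto simp: fW Wne divide_inverse_commute)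
  also have "\<dots> = (\<Sum>p\<in>{0..N}. (\<Sum>w\<in>W p. \<phi> (card (empty_vertices N (R p w)))) / real N / real (N+1))"
    by (rule sum.cong[OF refl]) (simp add: inner)
  also have "\<dots> = (\<Sum>p\<in>{0..N}. (if bot p then real N * \<phi> m else real m * \<phi> (m - 1) + (real N - real m) * \<phi> m)) / (real N * real (N+1))"
  proof -
    have val: "(\<Sum>w\<in>W p. \<phi> (card (empty_vertices N (R p w)))) = (if bot p then real N * \<phi> m else real m * \<phi> (m - 1) + (real N - real m) * \<phi> m)"
      if p: "p \<in> {0..N}" for p
    proof (cases "bot p")
      case True
      hence "R p w = c" for w by (simp add: R_def bot_def)
      thus ?thesis using True cW[of p] p by (simp add: m_def)
    next
      case False
      have pN: "p \<le> N" using p by simp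
      have o: "own N c p \<le> N" "p \<in> set (c (own N c p))" using own[OF pN] by auto
      have Re: "card (empty_vertices N (R p w)) = (if w \<in> E then m - 1 else m)" if w: "w \<in> W p" for w
      proof -
        have "empty_vertices N (R p w) = E - {w}"
          using False w step_empty[OF V o(2), of w] by (auto simp: R_def bot_def W_def E_def)
        thus ?thesis by (simp add: m_def E_def card_Diff_singleton_if finite_subset[of _ "{0..N}"] empty_vertices_def)
      qed
      have EW: "E \<subseteq> W p" using o by (auto simp: E_def W_def empty_vertices_def)
      have "(\<Sum>w\<in>W p. \<phi> (card (empty_vertices N (R p w)))) = (\<Sum>w\<in>W p. if w \<in> E then \<phi> (m - 1) else \<phi> m)"
        by (rule sum.cong[OF refl]) (simp add: Re)
      also have "\<dots> = (\<Sum>w\<in>W p \<inter> {w. w \<in> E}. \<phi> (m - 1)) + (\<Sum>w\<in>W p \<inter> - {w. w \<in> E}. \<phi> m)"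
        by (rule sum.If_cases) (rule fW)
      also have "W p \<inter> {w. w \<in> E} = E" using EW by auto
      also have "W p \<inter> - {w. w \<in> E} = W p - E" by auto
      also have "card (W p - E) = N - m"
      proof -
        have "finite E" using finite_subset[OF EW fW] .
        hence "card (W p - E) = card (W p) - card E" using EW by (rule card_Diff_subset)
        thus ?thesis using cW[OF pN] by (simp add: m_def E_def)
      qed
      hence "(\<Sum>w\<in>W p - E. \<phi> m) = (real N - real m) * \<phi> m" using mN by (simp add: of_nat_diff)
      finally show ?thesis using False by (simp add: m_def E_def)
    qed
    have "(\<Sum>p\<in>{0..N}. (\<Sum>w\<in>W p. \<phi> (card (empty_vertices N (R p w)))) / real N / real (N+1))
        = (\<Sum>p\<in>{0..N}. (\<Sum>w\<in>W p. \<phi> (card (empty_vertices N (R p w))))) / (real N * real (N+1))"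
      by (simp add: sum_divide_distrib)
    also have "\<dots> = (\<Sum>p\<in>{0..N}. (if bot p then real N * \<phi> m else real m * \<phi> (m - 1) + (real N - real m) * \<phi> m)) / (real N * real (N+1))"
      by (simp only: sum.cong[OF refl val])
    finally show ?thesis .
  qed
  also have "(\<Sum>p\<in>{0..N}. (if bot p then real N * \<phi> m else real m * \<phi> (m - 1) + (real N - real m) * \<phi> m))
      = real (N + 1 - m) * (real N * \<phi> m) + real m * (real m * \<phi> (m - 1) + (real N - real m) * \<phi> m)"
  proof -
    have cb: "card ({0..N} \<inter> {p. bot p}) = N + 1 - m"
      using card_bottom(1)[OF V] by (simp add: bot_def m_def Int_def conj_commute)
    have cnb: "card ({0..N} \<inter> - {p. bot p}) = m"
    proof -
      have "card ({0..N} \<inter> - {p. bot p}) = card {0..N} - card ({0..N} \<inter> {p. bot p})"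
      proof -
        have "{0..N} \<inter> - {p. bot p} = {0..N} - ({0..N} \<inter> {p. bot p})" by auto
        moreover have "card ({0..N} - ({0..N} \<inter> {p. bot p})) = card {0..N} - card ({0..N} \<inter> {p. bot p})"
          by (rule card_Diff_subset) auto
        ultimately show ?thesis by simp
      qed
      thus ?thesis using cb mN by simp
    qed
    show ?thesis by (subst sum.If_cases) (auto simp: cb cnb)
  qed
  also have "(real (N + 1 - m) * (real N * \<phi> m) + real m * (real m * \<phi> (m - 1) + (real N - real m) * \<phi> m)) / (real N * real (N+1))
      = qq N m * \<phi> (m - 1) + (1 - qq N m) * \<phi> m"
  proof -
    have r: "real (N + 1 - m) = real N + 1 - real m" using mN by (simp add: of_nat_diff)
    have pos: "real N > 0" using N by simp
    have pp: "real N * real N > 0" using pos by (rule mult_pos_pos[OF _ pos])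
    have p3: "real N + real N * real N > 0" using pos pp by linarith
    have D: "real N * (real N + 1) \<noteq> 0" "real N + real N * real N \<noteq> 0" "real N * real (N+1) \<noteq> 0"
      using pos p3 by (simp_all add: algebra_simps)
    show ?thesis unfolding r qq_def using D by (simp add: divide_simps power2_eq_square) (simp add: algebra_simps)
  qed
  finally show ?thesis by (simp add: m_def)
qed

lemma paths_nonempty: "xs \<in> set_pmf (dsf_paths N c n) \<Longrightarrow> xs \<noteq> []"
  by (induction n arbitrary: xs) auto

lemma paths_Suc_front:
  "dsf_paths N c (Suc n) = dsf_step N c \<bind> (\<lambda>y. map_pmf ((#) c) (dsf_paths N y n))"
proof (induction n)
  case 0
  show ?case by (simp add: bind_return_pmf map_pmf_def)
next
  case (Suc n)
  define K where "K xs = map_pmf (\<lambda>y. xs @ [y]) (dsf_step N (last xs))" for xs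
  have "dsf_paths N c (Suc (Suc n)) = dsf_paths N c (Suc n) \<bind> K"
    unfolding K_def by (rule dsf_paths.simps(2))
  also have "\<dots> = (dsf_step N c \<bind> (\<lambda>y. map_pmf ((#) c) (dsf_paths N y n))) \<bind> K"
    by (simp only: Suc)
  also have "\<dots> = dsf_step N c \<bind> (\<lambda>y. dsf_paths N y n \<bind> (\<lambda>xs. K (c # xs)))"
    by (simp add: bind_assoc_pmf bind_map_pmf)
  also have "\<dots> = dsf_step N c \<bind> (\<lambda>y. dsf_paths N y n \<bind> (\<lambda>xs. map_pmf ((#) c) (K xs)))"
  proof (intro bind_pmf_cong refl)
    fix y xs assume "xs \<in> set_pmf (dsf_paths N y n)"
    hence "xs \<noteq> []" by (rule paths_nonempty)
    thus "K (c # xs) = map_pmf ((#) c) (K xs)" by (simp add: K_def pmf.map_comp o_def)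
  qed
  also have "\<dots> = dsf_step N c \<bind> (\<lambda>y. map_pmf ((#) c) (dsf_paths N y (Suc n)))"
    by (simp add: map_bind_pmf K_def)
  finally show ?case .
qed

lemma halt_by_0: "halt_by N c 0 = (if halted N c then 1 else 0)"
  by (simp add: halt_by_def)

lemma halt_by_bounds: "0 \<le> halt_by N c n \<and> halt_by N c n \<le> 1"
  by (simp add: halt_by_def)

lemma halt_by_Suc:
  "halt_by N c (Suc n) = (if halted N c then 1 else measure_pmf.expectation (dsf_step N c) (\<lambda>y. halt_by N y n))"
proof -
  define E where "E = {xs. \<exists>x\<in>set xs. halted N x}"
  have "ennreal (halt_by N c (Suc n)) = emeasure (measure_pmf (dsf_paths N c (Suc n))) E"
    by (simp add: halt_by_def E_def measure_pmf.emeasure_eq_measure)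
  also have "\<dots> = (\<integral>\<^sup>+y. emeasure (measure_pmf (dsf_paths N y n)) ((#) c -` E) \<partial>measure_pmf (dsf_step N c))"
    unfolding paths_Suc_front by (simp only: emeasure_bind_pmf emeasure_map_pmf)
  finally have A: "ennreal (halt_by N c (Suc n)) = (\<integral>\<^sup>+y. emeasure (measure_pmf (dsf_paths N y n)) ((#) c -` E) \<partial>measure_pmf (dsf_step N c))" .
  show ?thesis
  proof (cases "halted N c")
    case True
    hence "(#) c -` E = UNIV" by (auto simp: E_def)
    hence "ennreal (halt_by N c (Suc n)) = 1" using A by (simp add: measure_pmf.emeasure_space_1[simplified])
    thus ?thesis using True by simp
  next
    case False
    hence "(#) c -` E = E" by (auto simp: E_def)
    hence "ennreal (halt_by N c (Suc n)) = (\<integral>\<^sup>+y. ennreal (halt_by N y n) \<partial>measure_pmf (dsf_step N c))"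
      using A by (simp add: halt_by_def E_def measure_pmf.emeasure_eq_measure)
    also have "\<dots> = ennreal (measure_pmf.expectation (dsf_step N c) (\<lambda>y. halt_by N y n))"
    proof (rule nn_integral_eq_integral)
      show "integrable (measure_pmf (dsf_step N c)) (\<lambda>y. halt_by N y n)"
        by (rule measure_pmf.integrable_const_bound[where B=1]) (auto simp: halt_by_bounds abs_le_iff)
    qed (auto simp: halt_by_bounds)
    finally have "ennreal (halt_by N c (Suc n)) = ennreal (measure_pmf.expectation (dsf_step N c) (\<lambda>y. halt_by N y n))" .
    moreover have "measure_pmf.expectation (dsf_step N c) (\<lambda>y. halt_by N y n) \<ge> 0"
      by (intro integral_nonneg_AE) (auto simp: halt_by_bounds)
    ultimately show ?thesis using False halt_by_bounds[of N c "Suc n"] by simp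
  qed
qed

definition Hm :: "nat \<Rightarrow> nat \<Rightarrow> nat \<Rightarrow> real" where
  "Hm N m n = 1 - (\<Sum>k=1..m. cc m k * (1 - qq N k) ^ n)"

lemma Hm_0: "Hm N 0 n = 1" by (simp add: Hm_def)
lemma Hm_zero: "m \<ge> 1 \<Longrightarrow> Hm N m 0 = 0" using cc_sum[of m] by (simp add: Hm_def)

lemma Hm_rec:
  assumes m: "m \<ge> 1"
  shows "Hm N m (Suc n) = qq N m * Hm N (m-1) n + (1 - qq N m) * Hm N m n"
proof -
  define Q where "Q k = 1 - qq N k" for k
  have key: "(\<Sum>k=1..m. cc m k * Q k ^ Suc n) = qq N m * (\<Sum>k=1..m-1. cc (m-1) k * Q k ^ n) + Q m * (\<Sum>k=1..m. cc m k * Q k ^ n)"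
  proof -
    have "(\<Sum>k=1..m. cc m k * Q k ^ Suc n) - Q m * (\<Sum>k=1..m. cc m k * Q k ^ n) = (\<Sum>k=1..m. cc m k * (Q k - Q m) * Q k ^ n)"
      by (simp add: sum_distrib_left sum_subtractf[symmetric] algebra_simps)
    also have "\<dots> = (\<Sum>k=1..m-1. cc m k * (Q k - Q m) * Q k ^ n)"
      using sum_split_last[OF m, of "\<lambda>k. cc m k * (Q k - Q m) * Q k ^ n"] by simp
    also have "\<dots> = (\<Sum>k=1..m-1. qq N m * (cc (m-1) k * Q k ^ n))"
    proof (rule sum.cong[OF refl])
      fix k assume k: "k \<in> {1..m-1}"
      have r: "cc m k * (real m ^ 2 - real k ^ 2) = real m ^ 2 * cc (m-1) k" using k m by (intro cc_rec) auto
      have "Q k - Q m = (real m ^ 2 - real k ^ 2) / (real N * (real N + 1))" by (simp add: Q_def qq_def diff_divide_distrib)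
      hence "cc m k * (Q k - Q m) = real m ^ 2 * cc (m-1) k / (real N * (real N + 1))" using r by (simp add: mult_divide_mult_cancel_left_if)
      thus "cc m k * (Q k - Q m) * Q k ^ n = qq N m * (cc (m-1) k * Q k ^ n)" by (simp add: qq_def)
    qed
    also have "\<dots> = qq N m * (\<Sum>k=1..m-1. cc (m-1) k * Q k ^ n)" by (simp add: sum_distrib_left)
    finally show ?thesis by simp
  qed
  show ?thesis unfolding Hm_def Q_def[symmetric] key by (simp add: Q_def algebra_simps)
qed

lemma halt_by_Hm:
  assumes N: "N \<ge> 1"
  shows "valid_config N c \<Longrightarrow> halt_by N c n = Hm N (card (empty_vertices N c)) n"
proof (induction n arbitrary: c)
  case 0
  show ?case
  proof (cases "halted N c")
    case True
    hence "card (empty_vertices N c) = 0" using halted_iff[OF "0.prems"] by simp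
    thus ?thesis using True by (simp add: halt_by_0 Hm_0)
  next
    case False
    hence "empty_vertices N c \<noteq> {}" using halted_iff[OF "0.prems"] by simp
    hence "card (empty_vertices N c) \<ge> 1" by (simp add: Suc_le_eq card_gt_0_iff empty_vertices_def)
    thus ?thesis using False by (simp add: halt_by_0 Hm_zero)
  qed
next
  case (Suc n)
  note V = Suc.prems
  show ?case
  proof (cases "halted N c")
    case True
    hence "card (empty_vertices N c) = 0" using halted_iff[OF V] by simp
    thus ?thesis using True by (simp add: halt_by_Suc Hm_0)
  next
    case False
    define m where "m = card (empty_vertices N c)"
    have "empty_vertices N c \<noteq> {}" using halted_iff[OF V] False by simp
    hence m1: "m \<ge> 1" by (simp add: m_def Suc_le_eq card_gt_0_iff empty_vertices_def)
    have supp: "valid_config N y" if "y \<in> set_pmf (dsf_step N c)" for y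
    proof -
      from that obtain p w where p: "p \<in> {0..N}" and w: "w \<in> {0..N} - {own N c p}"
        and y: "y = (if p = last (c (own N c p)) then c else c(own N c p := remove1 p (c (own N c p)), w := p # c w))"
      proof -
        have ne: "{0..N} - {own N c p} \<noteq> {}" for p
        proof (cases "own N c p = 0")
          case True thus ?thesis using N by (auto intro!: exI[of _ 1])
        next
          case False thus ?thesis by (auto intro!: exI[of _ 0])
        qed
        have sW: "set_pmf (pmf_of_set ({0..N} - {own N c p})) = {0..N} - {own N c p}" for p
          by (rule set_pmf_of_set[OF ne]) simp
        have sP: "set_pmf (pmf_of_set {0..N}) = {0..N}" by (rule set_pmf_of_set) auto
        have "y \<in> (\<Union>p\<in>{0..N}. \<Union>w\<in>{0..N} - {own N c p}. {if p = last (c (own N c p)) then c else c(own N c p := remove1 p (c (own N c p)), w := p # c w)})"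
          using \<open>y \<in> set_pmf (dsf_step N c)\<close> unfolding step_eq set_bind_pmf set_return_pmf sW sP .
        thus ?thesis using that by blast
      qed
      have o: "p \<in> set (c (own N c p))" using valid_owner[OF V] p by auto
      show ?thesis using y step_valid[OF V o, of w] w V by auto
    qed
    have "measure_pmf.expectation (dsf_step N c) (\<lambda>y. halt_by N y n)
        = measure_pmf.expectation (dsf_step N c) (\<lambda>y. Hm N (card (empty_vertices N y)) n)"
      by (rule integral_cong_AE) (auto intro!: AE_pmfI simp: Suc.IH supp)
    also have "\<dots> = qq N m * Hm N (m - 1) n + (1 - qq N m) * Hm N m n"
      unfolding m_def by (rule step_expect[OF V N])
    also have "\<dots> = Hm N m (Suc n)" using Hm_rec[OF m1] by simp
    finally show ?thesis using False by (simp add: halt_by_Suc m_def)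
  qed
qed

lemma poisson_Hm:
  assumes N: "N \<ge> 1" and x: "x \<ge> 0"
  shows "(\<Sum>n. exp (- (real (N+1) * (real N * x))) * (real (N+1) * (real N * x)) ^ n / fact n * Hm N m n) = Fm m x"
proof -
  define a where "a = real (N+1) * (real N * x)"
  have e1: "(\<lambda>n. a ^ n / fact n) sums exp a" using exp_converges[of a] by (simp add: divide_inverse mult.commute)
  have e2: "(\<lambda>n. (a * (1 - qq N k)) ^ n / fact n) sums exp (a * (1 - qq N k))" for k
    using exp_converges[of "a * (1 - qq N k)"] by (simp add: divide_inverse mult.commute)
  have S: "(\<lambda>n. exp (- a) * (a ^ n / fact n) - (\<Sum>k=1..m. exp (- a) * cc m k * ((a * (1 - qq N k)) ^ n / fact n)))
      sums (exp (- a) * exp a - (\<Sum>k=1..m. exp (- a) * cc m k * exp (a * (1 - qq N k))))"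
    by (intro sums_diff sums_mult sums_sum e1 e2)
  have T: "exp (- a) * a ^ n / fact n * Hm N m n
      = exp (- a) * (a ^ n / fact n) - (\<Sum>k=1..m. exp (- a) * cc m k * ((a * (1 - qq N k)) ^ n / fact n))" for n
  proof -
    have "exp (- a) * a ^ n / fact n * Hm N m n = exp (- a) * (a ^ n / fact n) - (\<Sum>k=1..m. exp (- a) * a ^ n / fact n * (cc m k * (1 - qq N k) ^ n))"
      by (simp add: Hm_def right_diff_distrib sum_distrib_left)
    also have "(\<Sum>k=1..m. exp (- a) * a ^ n / fact n * (cc m k * (1 - qq N k) ^ n)) = (\<Sum>k=1..m. exp (- a) * cc m k * ((a * (1 - qq N k)) ^ n / fact n))"
      by (rule sum.cong[OF refl]) (simp add: power_mult_distrib)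
    finally show ?thesis .
  qed
  have V: "exp (- a) * exp a - (\<Sum>k=1..m. exp (- a) * cc m k * exp (a * (1 - qq N k))) = Fm m x"
  proof -
    have ek: "exp (- a) * exp (a * (1 - qq N k)) = exp (- (real k ^ 2 * x))" for k
    proof -
      have pos: "real N * (real N + 1) \<noteq> 0" using N by simp
      have "- a + a * (1 - qq N k) = - (real k ^ 2 * x)"
        unfolding a_def qq_def using pos by (simp add: field_simps)
      thus ?thesis by (simp add: exp_add[symmetric])
    qed
    have t: "exp (- a) * cc m k * exp (a * (1 - qq N k)) = cc m k * exp (- (real k ^ 2 * x))" for k
    proof -
      have "exp (- a) * cc m k * exp (a * (1 - qq N k)) = cc m k * (exp (- a) * exp (a * (1 - qq N k)))"
        by (simp only: mult_ac)
      thus ?thesis by (simp only: ek)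
    qed
    have "exp (- a) * exp a = 1" by (simp add: exp_minus_inverse mult.commute)
    thus ?thesis unfolding Fm_def t by simp
  qed
  have fe: "(\<lambda>n. exp (- a) * a ^ n / fact n * Hm N m n) = (\<lambda>n. exp (- a) * (a ^ n / fact n) - (\<Sum>k=1..m. exp (- a) * cc m k * ((a * (1 - qq N k)) ^ n / fact n)))"
    by (rule ext) (rule T)
  have "(\<lambda>n. exp (- a) * a ^ n / fact n * Hm N m n) sums Fm m x" unfolding fe V[symmetric] by (rule S)
  hence "(\<Sum>n. exp (- a) * a ^ n / fact n * Hm N m n) = Fm m x" by (rule sums_unique[symmetric])
  thus ?thesis unfolding a_def .
qed

lemma halting_cdf_Fm:
  assumes N: "N \<ge> 1" and V: "valid_config N c" and x: "x \<ge> 0"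
  shows "halting_time_cdf N c (real N * x) = Fm (card (empty_vertices N c)) x"
proof -
  have "real N * x \<ge> 0" using x by simp
  hence "halting_time_cdf N c (real N * x) = (\<Sum>n. exp (- (real (N+1) * (real N * x))) * (real (N+1) * (real N * x)) ^ n / fact n * Hm N (card (empty_vertices N c)) n)"
    unfolding halting_time_cdf_def using halt_by_Hm[OF N V] by simp
  also have "\<dots> = Fm (card (empty_vertices N c)) x" by (rule poisson_Hm[OF N x])
  finally show ?thesis .
qed

theorem mainTheorem3:
  fixes c :: "nat \<Rightarrow> config"
  assumes valid: "\<And>N. N \<ge> 1 \<Longrightarrow> valid_config N (c N)"
    and m0_infty: "filterlim (\<lambda>N. card (empty_vertices N (c N))) at_top at_top"
  shows "prob_space tau_law
    \<and> (\<forall>\<sigma>::real. \<sigma> \<ge> 0 \<longrightarrow>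
          (\<integral>x. exp (- \<sigma> * x) \<partial>tau_law) = (\<Prod>m. inverse (1 + \<sigma> / (real (Suc m))^2)))
    \<and> (\<forall>\<sigma>::real. \<sigma> > 0 \<longrightarrow>
          (\<Prod>m. inverse (1 + \<sigma> / (real (Suc m))^2)) = pi * sqrt \<sigma> / sinh (pi * sqrt \<sigma>))
    \<and> weak_conv (\<lambda>N x. halting_time_cdf N (c N) (real N * x)) (cdf tau_law)"
proof (intro conjI allI impI)
  show "prob_space tau_law" by (rule tau_prob)
  fix \<sigma> :: real
  assume "\<sigma> \<ge> 0"
  thus "(\<integral>x. exp (- \<sigma> * x) \<partial>tau_law) = (\<Prod>m. inverse (1 + \<sigma> / (real (Suc m))^2))"
    by (rule laplace_tau)
next
  fix \<sigma> :: real
  assume s: "\<sigma> > 0"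
  show "(\<Prod>m. inverse (1 + \<sigma> / (real (Suc m))^2)) = pi * sqrt \<sigma> / sinh (pi * sqrt \<sigma>)"
    using prod_limit(2)[of \<sigma>] s by simp
next
  define m0 where "m0 N = card (empty_vertices N (c N))" for N
  have evN: "\<forall>\<^sub>F N in sequentially. N \<ge> (1::nat)" by (rule eventually_ge_at_top)
  have evm: "\<forall>\<^sub>F N in sequentially. m0 N \<ge> 1"
    using m0_infty unfolding m0_def filterlim_at_top by auto
  have H: "\<forall>\<^sub>F N in sequentially. halting_time_cdf N (c N) (real N * x) = (if x < 0 then 0 else Fm (m0 N) x)" for x
    using evN
  proof eventually_elim
    case (elim N)
    show ?case
    proof (cases "x < 0")
      case True
      hence "real N * x < 0" using elim by (simp add: mult_pos_neg)
      thus ?thesis using True by (simp add: halting_time_cdf_def)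
    next
      case False
      thus ?thesis using halting_cdf_Fm[OF elim valid[OF elim], of x] by (simp add: m0_def)
    qed
  qed
  show "weak_conv (\<lambda>N x. halting_time_cdf N (c N) (real N * x)) (cdf tau_law)"
    unfolding weak_conv_def
  proof (intro allI impI)
    fix x :: real
    have "(\<lambda>N. if x < 0 then 0 else Fm (m0 N) x) \<longlonglongrightarrow> cdf tau_law x"
    proof (cases "x > 0")
      case True
      have "(\<lambda>N. Fm (m0 N) x) \<longlonglongrightarrow> Gs x"
        by (rule filterlim_compose[OF tannery_F[OF True]]) (use m0_infty in \<open>simp add: m0_def\<close>)
      thus ?thesis using True by (simp add: cdf_tau)
    next
      case False
      have "\<forall>\<^sub>F N in sequentially. (if x < 0 then 0 else Fm (m0 N) x) = 0"
        using evm by eventually_elim (use False in \<open>auto simp: Fm_zero\<close>)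
      hence "(\<lambda>N. if x < 0 then 0 else Fm (m0 N) x) \<longlonglongrightarrow> 0"
        by (rule tendsto_eventually)
      thus ?thesis using False by (simp add: cdf_tau)
    qed
    thus "(\<lambda>N. halting_time_cdf N (c N) (real N * x)) \<longlonglongrightarrow> cdf tau_law x"
      by (rule Lim_transform_eventually) (use H[of x] in \<open>auto elim: eventually_mono\<close>)
  qed
qed

end
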